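(* Let $r\ge1$ and let $\mathrm{LP}_r(t)$ be the real linear program obtained from $\mathrm{LP}_r$ (described in the context) by substituting a real number $t$ for the parameter. Let $\mathcal C_t(\lambda)$ denote the point with parameter $\mu=t^\lambda$ of the primal-dual central path of $\mathrm{LP}_r(t)$ and its dual. Then $$\liminf_{t\to+\infty}\kappa(\mathcal C_t,[0,2])\ \ge\ (2^{r-1}-1)\frac{\pi}{2}.$$ The same bound holds for the primal central path $\lambda\mapsto(x,w)$-component of $\mathcal C_t(\lambda)$. In particular, the total curvatures of the whole primal-dual central path and of the whole primal central path of $\mathrm{LP}_r(t)$ have limit inferior at least $(2^{r-1}-1)\pi/2$ as $t\to+\infty$.
   Context: $\mathrm{LP}_r(t)$ is a linear program with $3r+4$ inequalities in dimension $2r+2$. In equality form, its decision variables are $x=(u_0,v_0,\dots,u_r,v_r)\in\mathbb R^{2r+2}$ and its slack variables are $w=(z_0,h_0,z_1,z'_1,h_1,\dots,z_r,z'_r,h_r)\in\mathbb R^{3r+2}$, all $\ge0$. The problem is: minimize $v_0$ subject to - $u_0+z_0=t$ and $v_0+h_0=t^2$; - for $1\le i\le r$: $u_i+z_i=tu_{i-1}$, $u_i+z'_i=tv_{i-1}$, and $v_i+h_i=t^{1-2^{-i}}(u_{i-1}+v_{i-1})$. Writing this as: minimize $c^Tx$ subject to $Ax+w=b$, $x,w\ge0$, with dual: maximize $-b^Ty$ subject to $-A^Ty+s=c$, $y,s\ge0$. Both are strictly feasible for large $t$. The central path point with parameter $\mu>0$ is the unique solution $(x,w,y,s)$ of $Ax+w=b$,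 $-A^Ty+s=c$, $w_iy_i=x_js_j=\mu$ for all $i,j$, $x,w,y,s>0$. Total curvature: for a polygonal curve, it is the sum of the angles between consecutive segments, where the angle between segments $UV$ and $VW$ is the angle in $[0,\pi]$ between the vectors $V-U$ and $W-V$. For a curve $\sigma:[a,b]\to\mathbb R^p$, $\kappa(\sigma,[a,b])$ is the supremum of the total curvatures of polygonal curves with vertices $\sigma(\tau_0),\dots,\sigma(\tau_N)$, $a\le\tau_0<\dots<\tau_N\le b$. *)

theory Defs
  imports "HOL-Analysis.Analysis"
begin

section \<open>Vectors of R^p as functions nat => real (coordinates 0..p-1)\<close>

definition dotp :: "nat \<Rightarrow> (nat \<Rightarrow> real) \<Rightarrow> (nat \<Rightarrow> real) \<Rightarrow> real" where
  "dotp p u v = (\<Sum>i<p. u i * v i)"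

definition normp :: "nat \<Rightarrow> (nat \<Rightarrow> real) \<Rightarrow> real" where
  "normp p u = sqrt (dotp p u u)"

definition vang :: "nat \<Rightarrow> (nat \<Rightarrow> real) \<Rightarrow> (nat \<Rightarrow> real) \<Rightarrow> real" where
  "vang p u v = (if normp p u = 0 \<or> normp p v = 0 then 0
                 else arccos (dotp p u v / (normp p u * normp p v)))"

definition poly_curv :: "nat \<Rightarrow> (nat \<Rightarrow> nat \<Rightarrow> real) \<Rightarrow> nat \<Rightarrow> real" where
  "poly_curv p P N = (\<Sum>k\<in>{1..<N}. vang p (P k - P (k - 1)) (P (k + 1) - P k))"

definition total_curvature :: "nat \<Rightarrow> (real \<Rightarrow> nat \<Rightarrow> real) \<Rightarrow> real set \<Rightarrow> ereal" where
  "total_curvature p \<sigma> S =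
     (SUP (N, \<tau>) \<in> {(N, \<tau>). strict_mono_on {..N} \<tau> \<and> \<tau> ` {..N} \<subseteq> S}.
        ereal (poly_curv p (\<lambda>k. \<sigma> (\<tau> k)) N))"

text \<open>Primal variables x (index j < 2r+2): u_i = x (2i), v_i = x (2i+1).
  Slack variables / constraint rows (index k < 3r+2): z_0 = w 0, h_0 = w 1, and for 1 <= i <= r:
  z_i = w (3i-1), z'_i = w (3i), h_i = w (3i+1).\<close>

definition nvar :: "nat \<Rightarrow> nat" where "nvar r = 2 * r + 2"
definition ncon :: "nat \<Rightarrow> nat" where "ncon r = 3 * r + 2"

definition LPA :: "real \<Rightarrow> nat \<Rightarrow> nat \<Rightarrow> real" where
  "LPA t k j =
    (if k = 0 then (if j = 0 then 1 else 0)
     else if k = 1 then (if j = 1 then 1 else 0)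
     else (let i = (k + 1) div 3 in
       if (k + 1) mod 3 = 0 then        \<comment> \<open>u_i + z_i = t u_{i-1}\<close>
         (if j = 2 * i then 1 else if j = 2 * (i - 1) then - t else 0)
       else if (k + 1) mod 3 = 1 then   \<comment> \<open>u_i + z'_i = t v_{i-1}\<close>
         (if j = 2 * i then 1 else if j = 2 * (i - 1) + 1 then - t else 0)
       else                             \<comment> \<open>v_i + h_i = t^(1-2^-i) (u_{i-1} + v_{i-1})\<close>
         (if j = 2 * i + 1 then 1
          else if j = 2 * (i - 1) \<or> j = 2 * (i - 1) + 1 then - (t powr (1 - 2 powr (- real i)))
          else 0)))"

definition LPb :: "real \<Rightarrow> nat \<Rightarrow> real" where
  "LPb t k = (if k = 0 then t else if k = 1 then t ^ 2 else 0)"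

text \<open>Objective: minimize v_0.\<close>
definition LPc :: "nat \<Rightarrow> real" where
  "LPc j = (if j = 1 then 1 else 0)"

definition cp_cond :: "nat \<Rightarrow> real \<Rightarrow> real \<Rightarrow>
    (nat \<Rightarrow> real) \<Rightarrow> (nat \<Rightarrow> real) \<Rightarrow> (nat \<Rightarrow> real) \<Rightarrow> (nat \<Rightarrow> real) \<Rightarrow> bool" where
  "cp_cond r t \<mu> x w y s \<longleftrightarrow>
     (\<forall>k<ncon r. (\<Sum>j<nvar r. LPA t k j * x j) + w k = LPb t k) \<and>
     (\<forall>j<nvar r. - (\<Sum>k<ncon r. LPA t k j * y k) + s j = LPc j) \<and>
     (\<forall>k<ncon r. w k * y k = \<mu>) \<and>
     (\<forall>j<nvar r. x j * s j = \<mu>) \<and>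
     (\<forall>j<nvar r. x j > 0 \<and> s j > 0) \<and>
     (\<forall>k<ncon r. w k > 0 \<and> y k > 0) \<and>
     (\<forall>j\<ge>nvar r. x j = 0 \<and> s j = 0) \<and>
     (\<forall>k\<ge>ncon r. w k = 0 \<and> y k = 0)"

definition cp_point :: "nat \<Rightarrow> real \<Rightarrow> real \<Rightarrow>
    (nat \<Rightarrow> real) \<times> (nat \<Rightarrow> real) \<times> (nat \<Rightarrow> real) \<times> (nat \<Rightarrow> real)" where
  "cp_point r t \<mu> = (THE (x, w, y, s). cp_cond r t \<mu> x w y s)"

definition pd_dim :: "nat \<Rightarrow> nat" where "pd_dim r = 2 * nvar r + 2 * ncon r"

definition pd_path :: "nat \<Rightarrow> real \<Rightarrow> real \<Rightarrow> nat \<Rightarrow> real" where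
  "pd_path r t lam = (case cp_point r t (t powr lam) of (x, w, y, s) \<Rightarrow>
     (\<lambda>k. if k < nvar r then x k
          else if k < nvar r + ncon r then w (k - nvar r)
          else if k < 2 * nvar r + ncon r then y (k - (nvar r + ncon r))
          else if k < pd_dim r then s (k - (2 * nvar r + ncon r))
          else 0))"

definition p_dim :: "nat \<Rightarrow> nat" where "p_dim r = nvar r + ncon r"

definition p_path :: "nat \<Rightarrow> real \<Rightarrow> real \<Rightarrow> nat \<Rightarrow> real" where
  "p_path r t lam = (case cp_point r t (t powr lam) of (x, w, y, s) \<Rightarrow>
     (\<lambda>k. if k < nvar r then x k
          else if k < p_dim r then w (k - nvar r)
          else 0))"

end

theory Submission
  imports Defs
begin

lemma sum_two:
  fixes x :: "nat \<Rightarrow> real"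
  assumes "a \<noteq> b" "a < n" "b < n"
  shows "(\<Sum>j<n. (if j = a then \<alpha> else if j = b then \<beta> else 0) * x j) = \<alpha> * x a + \<beta> * x b"
proof -
  have "(\<Sum>j<n. (if j = a then \<alpha> else if j = b then \<beta> else 0) * x j)
      = (\<Sum>j<n. (if j = a then \<alpha> * x a else 0) + (if j = b then \<beta> * x b else 0))"
    by (rule sum.cong) (use assms in auto)
  also have "\<dots> = \<alpha> * x a + \<beta> * x b" by (simp add: sum.distrib assms)
  finally show ?thesis .
qed

lemma sum_three:
  fixes x :: "nat \<Rightarrow> real"
  assumes "a \<noteq> b" "a \<noteq> c" "b \<noteq> c" "a < n" "b < n" "c < n"
  shows "(\<Sum>j<n. (if j = a then \<alpha> else if j = b \<or> j = c then \<beta> else 0) * x j) = \<alpha> * x a + \<beta> * x b + \<beta> * x c"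
proof -
  have "(\<Sum>j<n. (if j = a then \<alpha> else if j = b \<or> j = c then \<beta> else 0) * x j)
      = (\<Sum>j<n. (if j = a then \<alpha> * x a else 0) + (if j = b then \<beta> * x b else 0) + (if j = c then \<beta> * x c else 0))"
    by (rule sum.cong) (use assms in auto)
  also have "\<dots> = \<alpha> * x a + \<beta> * x b + \<beta> * x c" by (simp add: sum.distrib assms)
  finally show ?thesis .
qed

definition aa :: "nat \<Rightarrow> real" where "aa i = 1 - 2 powr (- real i)"

lemma sum_one:
  fixes x :: "nat \<Rightarrow> real"
  assumes "a < n"
  shows "(\<Sum>j<n. (if j = a then \<alpha> else 0) * x j) = \<alpha> * x a"
proof -
  have "(\<Sum>j<n. (if j = a then \<alpha> else 0) * x j) = (\<Sum>j<n. (if j = a then \<alpha> * x a else 0))"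
    by (rule sum.cong) auto
  then show ?thesis using assms by simp
qed

lemma row0: "(\<Sum>j<nvar r. LPA t 0 j * x j) = x 0"
  using sum_one[of 0 "nvar r" 1 x] by (simp add: LPA_def nvar_def)

lemma row1: "(\<Sum>j<nvar r. LPA t 1 j * x j) = x 1"
  using sum_one[of 1 "nvar r" 1 x] by (simp add: LPA_def nvar_def)

lemma LPA_gen:
  assumes "k \<noteq> 0" "k \<noteq> 1" "(k + 1) div 3 = i" "(k + 1) mod 3 = m"
  shows "LPA t k j = (if m = 0 then (if j = 2 * i then 1 else if j = 2 * (i - 1) then - t else 0)
       else if m = 1 then (if j = 2 * i then 1 else if j = 2 * (i - 1) + 1 then - t else 0)
       else (if j = 2 * i + 1 then 1
          else if j = 2 * (i - 1) \<or> j = 2 * (i - 1) + 1 then - (t powr (1 - 2 powr (- real i)))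
          else 0))"
  unfolding LPA_def Let_def using assms by (simp only: if_False)

lemma LPA_z: "LPA t (3*p+2) j = (if j = 2*p+2 then 1 else if j = 2*p then -t else 0)"
proof -
  have "LPA t (3*p+2) j = (if (0::nat) = 0 then (if j = 2 * Suc p then 1 else if j = 2 * (Suc p - 1) then - t else 0) else 0)"
    by (subst LPA_gen[where i="Suc p" and m=0]) auto
  then show ?thesis by simp
qed

lemma LPA_z': "LPA t (3*p+3) j = (if j = 2*p+2 then 1 else if j = 2*p+1 then -t else 0)"
proof -
  have "LPA t (3*p+3) j = (if (1::nat) = 0 then 0 else if (1::nat) = 1 then (if j = 2 * Suc p then 1 else if j = 2 * (Suc p - 1) + 1 then - t else 0) else 0)"
    by (subst LPA_gen[where i="Suc p" and m=1]) auto
  then show ?thesis by simp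
qed

lemma LPA_h: "LPA t (3*p+4) j = (if j = 2*p+3 then 1 else if j = 2*p \<or> j = 2*p+1 then - (t powr aa (Suc p)) else 0)"
proof -
  have "LPA t (3*p+4) j = (if (2::nat) = 0 then 0 else if (2::nat) = 1 then 0 else (if j = 2 * Suc p + 1 then 1
          else if j = 2 * (Suc p - 1) \<or> j = 2 * (Suc p - 1) + 1 then - (t powr (1 - 2 powr (- real (Suc p))))
          else 0))"
    by (subst LPA_gen[where i="Suc p" and m=2]) auto
  then show ?thesis by (simp add: aa_def)
qed

lemma rowz: assumes "p < r"
  shows "(\<Sum>j<nvar r. LPA t (3*p+2) j * x j) = x (2*p+2) - t * x (2*p)"
proof -
  have k: "(3*p+2+1) div 3 = Suc p" "(3*p+2+1) mod 3 = 0" by auto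
  have "(\<Sum>j<nvar r. LPA t (3*p+2) j * x j) = (\<Sum>j<nvar r. (if j = 2*p+2 then 1 else if j = 2*p then -t else 0) * x j)"
    by (rule sum.cong) (simp_all only: LPA_z)
  also have "\<dots> = x (2*p+2) - t * x (2*p)" using assms by (subst sum_two) (auto simp: nvar_def)
  finally show ?thesis .
qed

lemma rowz': assumes "p < r"
  shows "(\<Sum>j<nvar r. LPA t (3*p+3) j * x j) = x (2*p+2) - t * x (2*p+1)"
proof -
  have k: "(3*p+3+1) div 3 = Suc p" "(3*p+3+1) mod 3 = 1" by auto
  have "(\<Sum>j<nvar r. LPA t (3*p+3) j * x j) = (\<Sum>j<nvar r. (if j = 2*p+2 then 1 else if j = 2*p+1 then -t else 0) * x j)"
    by (rule sum.cong) (simp_all only: LPA_z')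
  also have "\<dots> = x (2*p+2) - t * x (2*p+1)" using assms by (subst sum_two) (auto simp: nvar_def)
  finally show ?thesis .
qed

lemma rowh: assumes "p < r"
  shows "(\<Sum>j<nvar r. LPA t (3*p+4) j * x j) = x (2*p+3) - t powr aa (Suc p) * (x (2*p) + x (2*p+1))"
proof -
  have k: "(3*p+4+1) div 3 = Suc p" "(3*p+4+1) mod 3 = 2" by auto
  have "(\<Sum>j<nvar r. LPA t (3*p+4) j * x j) = (\<Sum>j<nvar r. (if j = 2*p+3 then 1 else if j = 2*p \<or> j = 2*p+1 then - (t powr aa (Suc p)) else 0) * x j)"
    by (rule sum.cong) (simp_all only: LPA_h)
  also have "\<dots> = x (2*p+3) - t powr aa (Suc p) * (x (2*p) + x (2*p+1))" using assms
    by (subst sum_three) (auto simp: nvar_def algebra_simps)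
  finally show ?thesis .
qed

lemma row_cases:
  assumes "k < ncon r"
  shows "k = 0 \<or> k = 1 \<or> (\<exists>p<r. k = 3*p+2 \<or> k = 3*p+3 \<or> k = 3*p+4)"
proof (cases "k \<ge> 2")
  case True
  define i where "i = (k+1) div 3"
  have "k + 1 = 3*i + (k+1) mod 3" unfolding i_def by simp
  moreover have "(k+1) mod 3 < 3" by simp
  ultimately have "k = 3*i-1 \<or> k = 3*i \<or> k = 3*i+1" by linarith
  moreover have "1 \<le> i" "i \<le> r" using True assms unfolding i_def ncon_def by auto
  ultimately have "\<exists>p<r. k = 3*p+2 \<or> k = 3*p+3 \<or> k = 3*p+4"
    by (intro exI[of _ "i-1"]) auto
  then show ?thesis by blast
qed auto

lemma col1_nonpos: assumes "k \<noteq> 1" "t \<ge> 0" shows "LPA t k 1 \<le> 0"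
  using assms by (auto simp: LPA_def Let_def)

definition feas :: "nat \<Rightarrow> real \<Rightarrow> (nat \<Rightarrow> real) \<Rightarrow> (nat \<Rightarrow> real) \<Rightarrow> bool" where
  "feas r t x w \<longleftrightarrow> (\<forall>k<ncon r. (\<Sum>j<nvar r. LPA t k j * x j) + w k = LPb t k)"

lemma feas_iff: "feas r t x w \<longleftrightarrow>
   x 0 + w 0 = t \<and> x 1 + w 1 = t^2 \<and>
   (\<forall>p<r. x (2*p+2) + w (3*p+2) = t * x (2*p) \<and> x (2*p+2) + w (3*p+3) = t * x (2*p+1) \<and>
          x (2*p+3) + w (3*p+4) = t powr aa (Suc p) * (x (2*p) + x (2*p+1)))"
proof
  assume f: "feas r t x w"
  have r0: "x 0 + w 0 = t" using f[unfolded feas_def, rule_format, of 0] by (simp add: row0 ncon_def LPb_def)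
  have r1: "x 1 + w 1 = t^2" using f[unfolded feas_def, rule_format, of 1] row1[where r=r and t=t and x=x] by (simp add: ncon_def LPb_def)
  have "x (2*p+2) + w (3*p+2) = t * x (2*p) \<and> x (2*p+2) + w (3*p+3) = t * x (2*p+1) \<and>
          x (2*p+3) + w (3*p+4) = t powr aa (Suc p) * (x (2*p) + x (2*p+1))" if "p < r" for p
  proof -
    have a: "3*p+2 < ncon r" "3*p+3 < ncon r" "3*p+4 < ncon r" using that by (auto simp: ncon_def)
    have b: "LPb t (3*p+2) = 0" "LPb t (3*p+3) = 0" "LPb t (3*p+4) = 0" by (auto simp: LPb_def)
    show ?thesis
      using f[unfolded feas_def, rule_format, OF a(1)] f[unfolded feas_def, rule_format, OF a(2)]
        f[unfolded feas_def, rule_format, OF a(3)] rowz[OF that, of t x] rowz'[OF that, of t x] rowh[OF that, of t x] b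
      by (simp only: b) linarith
  qed
  then show "x 0 + w 0 = t \<and> x 1 + w 1 = t^2 \<and>
   (\<forall>p<r. x (2*p+2) + w (3*p+2) = t * x (2*p) \<and> x (2*p+2) + w (3*p+3) = t * x (2*p+1) \<and>
          x (2*p+3) + w (3*p+4) = t powr aa (Suc p) * (x (2*p) + x (2*p+1)))" using r0 r1 by blast
next
  assume e: "x 0 + w 0 = t \<and> x 1 + w 1 = t^2 \<and>
   (\<forall>p<r. x (2*p+2) + w (3*p+2) = t * x (2*p) \<and> x (2*p+2) + w (3*p+3) = t * x (2*p+1) \<and>
          x (2*p+3) + w (3*p+4) = t powr aa (Suc p) * (x (2*p) + x (2*p+1)))"
  show "feas r t x w" unfolding feas_def
  proof (intro allI impI)
    fix k assume k: "k < ncon r"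
    consider "k = 0" | "k = 1" | p where "p < r" "k = 3*p+2 \<or> k = 3*p+3 \<or> k = 3*p+4"
      using row_cases[OF k] by blast
    then show "(\<Sum>j<nvar r. LPA t k j * x j) + w k = LPb t k"
    proof cases
      case 1 then show ?thesis using e by (simp add: row0 LPb_def)
    next
      case 2 then show ?thesis using e row1[where r=r and t=t and x=x] by (simp add: LPb_def)
    next
      case (3 p) note p = 3(1) and kk = 3(2)
      have b: "LPb t (3*p+2) = 0" "LPb t (3*p+3) = 0" "LPb t (3*p+4) = 0" by (auto simp: LPb_def)
      have ee: "x (2*p+2) + w (3*p+2) = t * x (2*p)" "x (2*p+2) + w (3*p+3) = t * x (2*p+1)"
          "x (2*p+3) + w (3*p+4) = t powr aa (Suc p) * (x (2*p) + x (2*p+1))" using e p by auto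
      from kk show ?thesis
      proof (elim disjE)
        assume "k = 3*p+2" then show ?thesis using ee(1) b(1) rowz[OF p, of t x] by simp
      next
        assume "k = 3*p+3" then show ?thesis using ee(2) b(2) rowz'[OF p, of t x] by simp
      next
        assume "k = 3*p+4" then show ?thesis using ee(3) b(3) rowh[OF p, of t x] by simp
      qed
    qed
  qed
qed

lemma cp_feas: "cp_cond r t \<mu> x w y s \<Longrightarrow> feas r t x w"
  unfolding cp_cond_def feas_def by blast

lemma duality_sum:
  assumes cp: "cp_cond r t \<mu> x w y s" and f: "feas r t z w'"
  shows "(\<Sum>j<nvar r. z j * s j) + (\<Sum>k<ncon r. w' k * y k)
       = (\<Sum>j<nvar r. LPc j * z j) + (\<Sum>k<ncon r. LPb t k * y k)"
proof -
  have s: "s j = LPc j + (\<Sum>k<ncon r. LPA t k j * y k)" if "j < nvar r" for j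
  proof -
    have "- (\<Sum>k<ncon r. LPA t k j * y k) + s j = LPc j" using cp that unfolding cp_cond_def by blast
    then show ?thesis by linarith
  qed
  have "(\<Sum>j<nvar r. z j * s j) = (\<Sum>j<nvar r. LPc j * z j + (\<Sum>k<ncon r. y k * (LPA t k j * z j)))"
    by (rule sum.cong) (auto simp: s sum_distrib_left algebra_simps)
  also have "\<dots> = (\<Sum>j<nvar r. LPc j * z j) + (\<Sum>k<ncon r. y k * (\<Sum>j<nvar r. LPA t k j * z j))"
    by (simp add: sum.distrib sum_distrib_left sum.swap[of _ "{..<nvar r}"])
  also have "(\<Sum>k<ncon r. y k * (\<Sum>j<nvar r. LPA t k j * z j)) = (\<Sum>k<ncon r. y k * (LPb t k - w' k))"
    by (rule sum.cong) (use f in \<open>auto simp: feas_def eq_diff_eq\<close>)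
  finally show ?thesis by (simp add: algebra_simps sum_subtractf sum_distrib_left)
qed

lemma LPc_sum: "r \<ge> 0 \<Longrightarrow> (\<Sum>j<nvar r. LPc j * z j) = z 1"
  using sum_one[of 1 "nvar r" 1 z] by (simp add: LPc_def nvar_def)

lemma gap_identity:
  fixes \<mu> :: real
  assumes cp: "cp_cond r t \<mu> x w y s"
  shows "x 1 + (\<Sum>k<ncon r. LPb t k * y k) = (nvar r + ncon r) * \<mu>"
proof -
  have "(\<Sum>j<nvar r. x j * s j) = nvar r * \<mu>" using cp unfolding cp_cond_def by simp
  moreover have "(\<Sum>k<ncon r. w k * y k) = ncon r * \<mu>" using cp unfolding cp_cond_def by simp
  ultimately show ?thesis using duality_sum[OF cp cp_feas[OF cp]] LPc_sum[of r x] by (simp add: algebra_simps)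
qed

lemma ztrick:
  fixes \<mu> :: real and z w' x w y s :: "nat \<Rightarrow> real"
  assumes cp: "cp_cond r t \<mu> x w y s" and f: "feas r t z w'" and t: "t \<ge> 0"
    and zn: "\<forall>j<nvar r. z j \<ge> 0" and wn: "\<forall>k<ncon r. w' k \<ge> 0" and c: "z 1 \<le> x 1"
  shows "\<forall>j<nvar r. z j \<le> real (nvar r + ncon r) * x j" "\<forall>k<ncon r. w' k \<le> real (nvar r + ncon r) * w k"
proof -
  have pos: "\<forall>j<nvar r. x j > 0 \<and> s j > 0" "\<forall>k<ncon r. w k > 0 \<and> y k > 0"
    using cp unfolding cp_cond_def by auto
  have tot: "(\<Sum>j<nvar r. z j * s j) + (\<Sum>k<ncon r. w' k * y k) \<le> (nvar r + ncon r) * \<mu>"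
    using duality_sum[OF cp f] gap_identity[OF cp] LPc_sum[of r z] c by simp
  have n1: "(\<Sum>j<nvar r. z j * s j) \<ge> 0" "(\<Sum>k<ncon r. w' k * y k) \<ge> 0"
    using zn wn pos by (auto intro!: sum_nonneg)
  show "\<forall>j<nvar r. z j \<le> real (nvar r + ncon r) * x j"
  proof (intro allI impI)
    fix j assume j: "j < nvar r"
    have "z j * s j \<le> (\<Sum>j<nvar r. z j * s j)"
      by (rule member_le_sum) (use j zn pos in auto)
    then have "z j * s j \<le> (nvar r + ncon r) * \<mu>" using tot n1 by linarith
    also have "\<mu> = x j * s j" using cp j unfolding cp_cond_def by simp
    finally have "z j * s j \<le> ((nvar r + ncon r) * x j) * s j" by (simp add: mult.assoc)
    then show "z j \<le> (nvar r + ncon r) * x j" using pos j by (meson mult_right_le_imp_le)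
  qed
  show "\<forall>k<ncon r. w' k \<le> real (nvar r + ncon r) * w k"
  proof (intro allI impI)
    fix k assume k: "k < ncon r"
    have "w' k * y k \<le> (\<Sum>k<ncon r. w' k * y k)"
      by (rule member_le_sum) (use k wn pos in auto)
    then have "w' k * y k \<le> (nvar r + ncon r) * \<mu>" using tot n1 by linarith
    also have "\<mu> = w k * y k" using cp k unfolding cp_cond_def by simp
    finally have "w' k * y k \<le> ((nvar r + ncon r) * w k) * y k" by (simp add: mult.assoc)
    then show "w' k \<le> (nvar r + ncon r) * w k" using pos k by (meson mult_right_le_imp_le)
  qed
qed

fun gr :: "real \<Rightarrow> real \<Rightarrow> nat \<Rightarrow> real \<times> real" where
  "gr t \<nu> 0 = (t/2, \<nu>)"
| "gr t \<nu> (Suc p) = (t * min (fst (gr t \<nu> p)) (snd (gr t \<nu> p)) / 2,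
                      t powr aa (Suc p) * (fst (gr t \<nu> p) + snd (gr t \<nu> p)) / 2)"

definition gx :: "nat \<Rightarrow> real \<Rightarrow> real \<Rightarrow> nat \<Rightarrow> real" where
  "gx r t \<nu> j = (if j < nvar r then (if even j then fst (gr t \<nu> (j div 2)) else snd (gr t \<nu> (j div 2))) else 0)"

definition gw :: "nat \<Rightarrow> real \<Rightarrow> real \<Rightarrow> nat \<Rightarrow> real" where
  "gw r t \<nu> k = (if k < ncon r then LPb t k - (\<Sum>j<nvar r. LPA t k j * gx r t \<nu> j) else 0)"

lemma gfeas: "feas r t (gx r t \<nu>) (gw r t \<nu>)"
  unfolding feas_def gw_def by simp

lemma gx_u: "p \<le> r \<Longrightarrow> gx r t \<nu> (2*p) = fst (gr t \<nu> p)"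
  by (simp add: gx_def nvar_def)
lemma gx_v: "p \<le> r \<Longrightarrow> gx r t \<nu> (2*p+1) = snd (gr t \<nu> p)"
  by (simp add: gx_def nvar_def)

lemma gr_pos: "t > 0 \<Longrightarrow> \<nu> > 0 \<Longrightarrow> fst (gr t \<nu> p) > 0 \<and> snd (gr t \<nu> p) > 0"
  by (induction p) auto

lemma gx_pos: "t > 0 \<Longrightarrow> \<nu> > 0 \<Longrightarrow> j < nvar r \<Longrightarrow> gx r t \<nu> j > 0"
  using gr_pos by (auto simp: gx_def)

lemma gw_vals:
  assumes "t > 0" "\<nu> > 0"
  shows "gw r t \<nu> 0 = t/2" "gw r t \<nu> 1 = t^2 - \<nu>"
    "p < r \<Longrightarrow> gw r t \<nu> (3*p+2) \<ge> t * fst (gr t \<nu> p) / 2"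
    "p < r \<Longrightarrow> gw r t \<nu> (3*p+3) \<ge> t * snd (gr t \<nu> p) / 2"
    "p < r \<Longrightarrow> gw r t \<nu> (3*p+4) = snd (gr t \<nu> (Suc p))"
proof -
  note f = gfeas[of r t \<nu>, unfolded feas_iff]
  have g0: "gx r t \<nu> 0 = t/2" using gx_u[of 0 r t \<nu>] by simp
  have g1: "gx r t \<nu> 1 = \<nu>" using gx_v[of 0 r t \<nu>] by simp
  show "gw r t \<nu> 0 = t/2" using f g0 by linarith
  show "gw r t \<nu> 1 = t^2 - \<nu>" using f g1 by linarith
  assume p: "p < r"
  have e: "gx r t \<nu> (2*p+2) + gw r t \<nu> (3*p+2) = t * gx r t \<nu> (2*p)"
       "gx r t \<nu> (2*p+2) + gw r t \<nu> (3*p+3) = t * gx r t \<nu> (2*p+1)"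
       "gx r t \<nu> (2*p+3) + gw r t \<nu> (3*p+4) = t powr aa (Suc p) * (gx r t \<nu> (2*p) + gx r t \<nu> (2*p+1))"
    using f p by auto
  have q1: "gx r t \<nu> (2*Suc p) = fst (gr t \<nu> (Suc p))" "gx r t \<nu> (2*Suc p+1) = snd (gr t \<nu> (Suc p))"
     "gx r t \<nu> (2*p) = fst (gr t \<nu> p)" "gx r t \<nu> (2*p+1) = snd (gr t \<nu> p)"
    using gx_u[of "Suc p" r t \<nu>] gx_v[of "Suc p" r t \<nu>] gx_u[of p r t \<nu>] gx_v[of p r t \<nu>] p by auto
  have i1: "2*Suc p = 2*p+2" "2*Suc p+1 = 2*p+3" by auto
  note q = q1(1)[unfolded i1(1)] q1(2)[unfolded i1(2)] q1(3) q1(4)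
  have mn: "min (fst (gr t \<nu> p)) (snd (gr t \<nu> p)) \<le> fst (gr t \<nu> p)"
           "min (fst (gr t \<nu> p)) (snd (gr t \<nu> p)) \<le> snd (gr t \<nu> p)" by auto
  have tt: "t * min (fst (gr t \<nu> p)) (snd (gr t \<nu> p)) \<le> t * fst (gr t \<nu> p)"
           "t * min (fst (gr t \<nu> p)) (snd (gr t \<nu> p)) \<le> t * snd (gr t \<nu> p)"
    using mn assms by (auto intro: mult_left_mono)
  show "gw r t \<nu> (3*p+2) \<ge> t * fst (gr t \<nu> p) / 2" using e(1) q tt by simp
  show "gw r t \<nu> (3*p+3) \<ge> t * snd (gr t \<nu> p) / 2" using e(2) q tt by simp
  have "snd (gr t \<nu> (Suc p)) + gw r t \<nu> (3*p+4) = t powr aa (Suc p) * (fst (gr t \<nu> p) + snd (gr t \<nu> p))"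
    using e(3) unfolding q .
  moreover have "snd (gr t \<nu> (Suc p)) = t powr aa (Suc p) * (fst (gr t \<nu> p) + snd (gr t \<nu> p)) / 2" by simp
  ultimately show "gw r t \<nu> (3*p+4) = snd (gr t \<nu> (Suc p))" by linarith
qed

lemma gw_pos:
  assumes "t > 0" "\<nu> > 0" "\<nu> < t^2" "k < ncon r"
  shows "gw r t \<nu> k > 0"
proof -
  consider "k = 0" | "k = 1" | p where "p < r" "k = 3*p+2 \<or> k = 3*p+3 \<or> k = 3*p+4"
    using row_cases[OF assms(4)] by blast
  then show ?thesis
  proof cases
    case 1
    have "gw r t \<nu> 0 = t/2" by (rule gw_vals(1)[OF assms(1,2)])
    with 1 assms show ?thesis by simp
  next
    case 2
    have "gw r t \<nu> 1 = t^2 - \<nu>" by (rule gw_vals(2)[OF assms(1,2)])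
    with 2 assms show ?thesis by simp
  next
    case (3 p)
    have "fst (gr t \<nu> p) > 0" "snd (gr t \<nu> p) > 0" "snd (gr t \<nu> (Suc p)) > 0" using gr_pos assms by blast+
    then have "t * fst (gr t \<nu> p) > 0" "t * snd (gr t \<nu> p) > 0" using assms(1) by auto
    then show ?thesis using 3(2) gw_vals(3-5)[OF assms(1,2) 3(1)] \<open>snd (gr t \<nu> (Suc p)) > 0\<close>
      by (elim disjE; hypsubst; linarith)
  qed
qed

lemma feas_ub:
  assumes f: "feas r t x w" and xn: "\<forall>j<nvar r. x j \<ge> 0" and wn: "\<forall>k<ncon r. w k \<ge> 0" and p: "p < r"
  shows "x (2*p+2) \<le> t * x (2*p)" "x (2*p+2) \<le> t * x (2*p+1)"
        "x (2*p+3) \<le> t powr aa (Suc p) * (x (2*p) + x (2*p+1))"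
        "w (3*p+2) \<le> t * x (2*p)" "w (3*p+3) \<le> t * x (2*p+1)"
        "w (3*p+4) \<le> t powr aa (Suc p) * (x (2*p) + x (2*p+1))"
proof -
  have e: "x (2*p+2) + w (3*p+2) = t * x (2*p)" "x (2*p+2) + w (3*p+3) = t * x (2*p+1)"
          "x (2*p+3) + w (3*p+4) = t powr aa (Suc p) * (x (2*p) + x (2*p+1))"
    using f p unfolding feas_iff by auto
  have nn: "x (2*p+2) \<ge> 0" "x (2*p+3) \<ge> 0" "w (3*p+2) \<ge> 0" "w (3*p+3) \<ge> 0" "w (3*p+4) \<ge> 0"
    using xn wn p by (auto simp: nvar_def ncon_def)
  show "x (2*p+2) \<le> t * x (2*p)" "x (2*p+2) \<le> t * x (2*p+1)"
        "x (2*p+3) \<le> t powr aa (Suc p) * (x (2*p) + x (2*p+1))"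
        "w (3*p+2) \<le> t * x (2*p)" "w (3*p+3) \<le> t * x (2*p+1)"
        "w (3*p+4) \<le> t powr aa (Suc p) * (x (2*p) + x (2*p+1))"
    using e nn by linarith+
qed

lemma aa_bounds: "0 \<le> aa i" "aa i < 1"
proof -
  have "2 powr (- real i) \<le> 2 powr 0" by (rule powr_mono) auto
  then have "2 powr (- real i) \<le> 1" by simp
  moreover have "2 powr (- real i) > 0" by simp
  ultimately show "0 \<le> aa i" "aa i < 1" by (auto simp: aa_def)
qed

lemma tpow_aa_le: "t \<ge> 1 \<Longrightarrow> t powr aa i \<le> t"
  using powr_mono[of "aa i" 1 t] aa_bounds[of i] by simp

lemma tpow_aa_ge: "t \<ge> 1 \<Longrightarrow> t powr aa i \<ge> 1"
  using aa_bounds[of i] by (simp add: ge_one_powr_ge_zero)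

lemma feas_bound:
  assumes f: "feas r t x w" and xn: "\<forall>j<nvar r. x j \<ge> 0" and wn: "\<forall>k<ncon r. w k \<ge> 0" and t: "t \<ge> 1"
  shows "\<forall>j<nvar r. x j \<le> (2*t)^(r+2)" "\<forall>k<ncon r. w k \<le> (2*t)^(r+2)"
proof -
  have e0: "x 0 + w 0 = t" "x 1 + w 1 = t^2" using f unfolding feas_iff by auto
  have nn0: "x 0 \<ge> 0" "x 1 \<ge> 0" "w 0 \<ge> 0" "w 1 \<ge> 0" using xn wn by (auto simp: nvar_def ncon_def)
  have B: "x (2*p) \<le> (2*t)^(p+2) \<and> x (2*p+1) \<le> (2*t)^(p+2)" if "p \<le> r" for p
    using that
  proof (induction p)
    case 0
    have "t \<le> (2*t)^2" "t^2 \<le> (2*t)^2" using t by (auto simp: power2_eq_square)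
    then have "x 0 \<le> (2*t)^2" "x 1 \<le> (2*t)^2" using e0 nn0 by linarith+
    then show ?case by (simp add: power2_eq_square)
  next
    case (Suc p)
    then have p: "p < r" by simp
    have IH: "x (2*p) \<le> (2*t)^(p+2)" "x (2*p+1) \<le> (2*t)^(p+2)" using Suc by auto
    have nn: "x (2*p) \<ge> 0" "x (2*p+1) \<ge> 0" using xn p by (auto simp: nvar_def)
    note ub = feas_ub[OF f xn wn p]
    have "t * x (2*p) \<le> t * (2*t)^(p+2)" using IH t by (intro mult_left_mono) auto
    then have "x (2*p+2) \<le> t * (2*t)^(p+2)" using ub(1) by linarith
    also have "\<dots> \<le> (2*t)^(Suc p + 2)" using t by simp
    finally have a: "x (2*p+2) \<le> (2*t)^(Suc p + 2)" .
    have "t powr aa (Suc p) * (x (2*p) + x (2*p+1)) \<le> t * (x (2*p) + x (2*p+1))"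
      using tpow_aa_le[OF t, of "Suc p"] nn by (intro mult_right_mono) auto
    then have "x (2*p+3) \<le> t * (x (2*p) + x (2*p+1))"
      using ub(3) by linarith
    also have "\<dots> \<le> t * (2 * (2*t)^(p+2))" using IH t by (intro mult_left_mono) auto
    also have "\<dots> = (2*t)^(Suc p + 2)" by simp
    finally have b: "x (2*p+3) \<le> (2*t)^(Suc p + 2)" .
    show ?case using a b by (simp add: numeral_eq_Suc)
  qed
  have mono: "(2*t)^(p+2) \<le> (2*t)^(r+2)" if "p \<le> r" for p
    using t that by (intro power_increasing) auto
  show "\<forall>j<nvar r. x j \<le> (2*t)^(r+2)"
  proof (intro allI impI)
    fix j assume j: "j < nvar r"
    show "x j \<le> (2*t)^(r+2)"
    proof (cases "even j")
      case True then obtain p where "j = 2*p" by auto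
      then show ?thesis using B[of p] mono[of p] j by (auto simp: nvar_def)
    next
      case False then obtain p where "j = 2*p+1" using oddE by blast
      then show ?thesis using B[of p] mono[of p] j by (auto simp: nvar_def)
    qed
  qed
  show "\<forall>k<ncon r. w k \<le> (2*t)^(r+2)"
  proof (intro allI impI)
    fix k assume k: "k < ncon r"
    have r2: "(2*t)^2 \<le> (2*t)^(r+2)" using mono[of 0] by (simp only: add_0 le0)
    have "t \<le> (2*t)^2" "t^2 \<le> (2*t)^2" using t by (auto simp: power2_eq_square)
    consider "k = 0" | "k = 1" | p where "p < r" "k = 3*p+2 \<or> k = 3*p+3 \<or> k = 3*p+4"
      using row_cases[OF k] by blast
    then show "w k \<le> (2*t)^(r+2)"
    proof cases
      case 1
      then have "w k = w 0" by simp
      then show ?thesis using e0 nn0 r2 \<open>t \<le> (2*t)^2\<close> by linarith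
    next
      case 2
      then have "w k = w 1" by simp
      then show ?thesis using e0 nn0 r2 \<open>t^2 \<le> (2*t)^2\<close> by linarith
    next
      case (3 p)
      have IH: "x (2*p) \<le> (2*t)^(p+2)" "x (2*p+1) \<le> (2*t)^(p+2)" using B[of p] 3 by auto
      have nn: "x (2*p) \<ge> 0" "x (2*p+1) \<ge> 0" using xn 3 by (auto simp: nvar_def)
      note ub = feas_ub[OF f xn wn 3(1)]
      have m1: "t * (2*t)^(p+2) \<le> (2*t)^(r+2)"
      proof -
        have "t * (2*t)^(p+2) \<le> (2*t)^(Suc p+2)" using t by simp
        then show ?thesis using mono[of "Suc p"] 3 by simp
      qed
      have m2: "t * (2 * (2*t)^(p+2)) \<le> (2*t)^(r+2)" using mono[of "Suc p"] 3 by simp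
      have c1: "t * x (2*p) \<le> (2*t)^(r+2)"
        using mult_left_mono[OF IH(1), of t] t m1 by linarith
      have c2: "t * x (2*p+1) \<le> (2*t)^(r+2)"
        using mult_left_mono[OF IH(2), of t] t m1 by linarith
      have c3: "t powr aa (Suc p) * (x (2*p) + x (2*p+1)) \<le> (2*t)^(r+2)"
      proof -
        have "t powr aa (Suc p) * (x (2*p) + x (2*p+1)) \<le> t * (x (2*p) + x (2*p+1))"
          using tpow_aa_le[OF t, of "Suc p"] nn by (intro mult_right_mono) auto
        also have "\<dots> \<le> t * (2 * (2*t)^(p+2))" using IH t by (intro mult_left_mono) auto
        finally show ?thesis using m2 by linarith
      qed
      from 3(2) show ?thesis
      proof (elim disjE)
        assume "k = 3*p+2" then show ?thesis using ub(4) c1 by simp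
      next
        assume "k = 3*p+3" then show ?thesis using ub(5) c2 by simp
      next
        assume "k = 3*p+4" then show ?thesis using ub(6) c3 by simp
      qed
    qed
  qed
qed

definition Wf :: "nat \<Rightarrow> real \<Rightarrow> (nat \<Rightarrow> real) \<Rightarrow> nat \<Rightarrow> real" where
  "Wf r t x k = LPb t k - (\<Sum>j<nvar r. LPA t k j * x j)"

definition phi :: "nat \<Rightarrow> real \<Rightarrow> real \<Rightarrow> (nat \<Rightarrow> real) \<Rightarrow> real" where
  "phi r t \<mu> x = x 1 / \<mu> - (\<Sum>j<nvar r. ln (x j)) - (\<Sum>k<ncon r. ln (Wf r t x k))"

definition inO :: "nat \<Rightarrow> real \<Rightarrow> (nat \<Rightarrow> real) \<Rightarrow> bool" where
  "inO r t x \<longleftrightarrow> (\<forall>j<nvar r. x j > 0) \<and> (\<forall>k<ncon r. Wf r t x k > 0) \<and> (\<forall>j\<ge>nvar r. x j = 0)"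

lemma feas_W: "feas r t x (Wf r t x)"
  unfolding feas_def Wf_def by simp

lemma one_lt_nvar: "1 < nvar r" by (simp add: nvar_def)

lemma coercive:
  assumes t: "t \<ge> 1" and mu: "\<mu> > 0" and O: "inO r t x" and le: "phi r t \<mu> x \<le> \<Phi>"
  defines "R \<equiv> (2*t)^(r+2)"
  defines "\<delta> \<equiv> exp (- \<Phi> - real (nvar r + ncon r) * ln R)"
  shows "(\<forall>j<nvar r. \<delta> \<le> x j) \<and> (\<forall>k<ncon r. \<delta> \<le> Wf r t x k)"
proof -
  have xn: "\<forall>j<nvar r. x j \<ge> 0" and wn: "\<forall>k<ncon r. Wf r t x k \<ge> 0" using O unfolding inO_def by (auto simp: less_imp_le)
  note fb = feas_bound[OF feas_W xn wn t, folded R_def]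
  have R1: "R \<ge> 1" unfolding R_def by (rule one_le_power) (use t in simp)
  have lnR: "ln R \<ge> 0" using R1 by simp
  have xp: "\<forall>j<nvar r. x j > 0" and wp: "\<forall>k<ncon r. Wf r t x k > 0" using O unfolding inO_def by auto
  define T where "T = (\<Sum>j<nvar r. ln R - ln (x j)) + (\<Sum>k<ncon r. ln R - ln (Wf r t x k))"
  have t1: "\<forall>j<nvar r. ln R - ln (x j) \<ge> 0" using fb(1) xp R1 by auto
  have t2: "\<forall>k<ncon r. ln R - ln (Wf r t x k) \<ge> 0" using fb(2) wp R1 by auto
  have s1: "(\<Sum>j<nvar r. ln R - ln (x j)) \<ge> 0" "(\<Sum>k<ncon r. ln R - ln (Wf r t x k)) \<ge> 0"
    using t1 t2 by (auto intro: sum_nonneg)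
  have x1: "x 1 \<ge> 0" using xn one_lt_nvar by auto
  have "T = real (nvar r + ncon r) * ln R + phi r t \<mu> x - x 1 / \<mu>"
    unfolding T_def phi_def by (simp add: sum_subtractf algebra_simps)
  also have "\<dots> \<le> real (nvar r + ncon r) * ln R + \<Phi>"
  proof -
    have "x 1 / \<mu> \<ge> 0" using x1 mu by simp
    then show ?thesis using le by linarith
  qed
  finally have T: "T \<le> real (nvar r + ncon r) * ln R + \<Phi>" .
  have key: "ln \<delta> \<le> ln R - T" unfolding \<delta>_def using T lnR by simp
  have dpos: "\<delta> > 0" unfolding \<delta>_def by simp
  show ?thesis
  proof (intro conjI allI impI)
    fix j assume j: "j < nvar r"
    have "ln R - ln (x j) \<le> (\<Sum>j<nvar r. ln R - ln (x j))" by (rule member_le_sum) (use j t1 in auto)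
    then have "ln \<delta> \<le> ln (x j)" using key s1 unfolding T_def by linarith
    then show "\<delta> \<le> x j" using dpos xp j by simp
  next
    fix k assume k: "k < ncon r"
    have "ln R - ln (Wf r t x k) \<le> (\<Sum>k<ncon r. ln R - ln (Wf r t x k))" by (rule member_le_sum) (use k t2 in auto)
    then have "ln \<delta> \<le> ln (Wf r t x k)" using key s1 unfolding T_def by linarith
    then show "\<delta> \<le> Wf r t x k" using dpos wp k by simp
  qed
qed

lemma cont_coord [continuous_intros]: "continuous_on S (\<lambda>x::nat \<Rightarrow> real. x i)"
  by (rule continuous_on_subset[OF continuous_on_product_coordinates]) simp

lemma cont_Wf [continuous_intros]: "continuous_on S (\<lambda>x. Wf r t x k)"
  unfolding Wf_def by (intro continuous_intros)

lemma compact_box: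
  "compact (PiE UNIV (\<lambda>j. if j < n then {0..R} else {0::real}))"
proof -
  have "compactin (product_topology (\<lambda>i. euclidean) UNIV) (PiE UNIV (\<lambda>j. if j < n then {0..R} else {0::real}))"
    unfolding compactin_PiE by auto
  then show ?thesis unfolding euclidean_product_topology by simp
qed

lemma upd_sum:
  fixes x :: "nat \<Rightarrow> real"
  assumes "j < n"
  shows "(\<Sum>i<n. f i * (x(j := x j + h)) i) = (\<Sum>i<n. f i * x i) + f j * h"
proof -
  have "(\<Sum>i<n. f i * (x(j := x j + h)) i) = (\<Sum>i<n. f i * x i + (if i = j then f j * h else 0))"
    by (rule sum.cong) (auto simp: algebra_simps)
  then show ?thesis using assms by (simp add: sum.distrib)
qed

lemma cp_exists:
  fixes \<mu> :: real
  assumes t: "t \<ge> 2" and mu: "\<mu> > 0"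
  shows "\<exists>x w y s. cp_cond r t \<mu> x w y s"
proof -
  define n where "n = nvar r"
  define m where "m = ncon r"
  define xb where "xb = gx r t 1"
  have t0: "t > 0" "t \<ge> 1" using t by auto
  have "2*2 \<le> t*t" using mult_mono[OF t t] t by simp
  then have t2: "1 < t^2" by (simp add: power2_eq_square)
  have Oxb: "inO r t xb"
    unfolding inO_def
  proof (intro conjI allI impI)
    fix j assume "j < nvar r" then show "xb j > 0" unfolding xb_def using gx_pos t0 by simp
  next
    fix k assume k: "k < ncon r"
    have "Wf r t xb k = gw r t 1 k" using k unfolding Wf_def gw_def xb_def by simp
    then show "Wf r t xb k > 0" using gw_pos[OF t0(1) _ t2 k] by simp
  next
    fix j assume "nvar r \<le> j" then show "xb j = 0" unfolding xb_def gx_def by simp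
  qed
  define \<Phi> where "\<Phi> = phi r t \<mu> xb"
  define R where "R = (2*t)^(r+2)"
  define \<delta> where "\<delta> = exp (- \<Phi> - real (nvar r + ncon r) * ln R)"
  have dpos: "\<delta> > 0" unfolding \<delta>_def by simp
  define K where "K = {x. (\<forall>j<n. \<delta> \<le> x j \<and> x j \<le> R) \<and> (\<forall>j\<ge>n. x j = 0) \<and> (\<forall>k<m. \<delta> \<le> Wf r t x k)}"
  have inK: "x \<in> K" if "inO r t x" "phi r t \<mu> x \<le> \<Phi>" for x
  proof -
    have xn: "\<forall>j<nvar r. x j \<ge> 0" and wn: "\<forall>k<ncon r. Wf r t x k \<ge> 0" using that(1) unfolding inO_def by (auto simp: less_imp_le)
    note fb = feas_bound[OF feas_W xn wn t0(2), folded R_def]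
    show ?thesis using coercive[OF t0(2) mu that, folded R_def, folded \<delta>_def] fb that(1)
      unfolding K_def n_def m_def inO_def by auto
  qed
  have K_O: "inO r t x" if "x \<in> K" for x
    using that dpos unfolding K_def inO_def n_def m_def by force
  have Keq: "K = PiE UNIV (\<lambda>j. if j < n then {0..R} else {0::real}) \<inter>
      ((\<Inter>j\<in>{..<n}. {x. \<delta> \<le> x j}) \<inter> (\<Inter>k\<in>{..<m}. {x. \<delta> \<le> Wf r t x k}))"
    unfolding K_def using dpos by (auto simp: PiE_iff split: if_splits)
  have cK: "compact K" unfolding Keq
    by (intro compact_Int_closed compact_box closed_Int closed_INT ballI closed_Collect_le continuous_intros)
  have xbK: "xb \<in> K" using inK[OF Oxb] unfolding \<Phi>_def by simp
  have contK: "continuous_on K (phi r t \<mu>)"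
  proof -
    have "\<forall>x\<in>K. \<forall>j<n. x j \<noteq> 0" "\<forall>x\<in>K. \<forall>k<m. Wf r t x k \<noteq> 0"
      using K_O unfolding inO_def n_def m_def by force+
    then show ?thesis unfolding phi_def n_def[symmetric] m_def[symmetric]
      using mu by (intro continuous_intros) auto
  qed
  obtain xs where xsK: "xs \<in> K" and xsmin: "\<forall>y\<in>K. phi r t \<mu> xs \<le> phi r t \<mu> y"
    using continuous_attains_inf[OF cK _ contK] xbK by blast
  have Oxs: "inO r t xs" using K_O[OF xsK] .
  have xsp: "\<forall>i<n. xs i > 0" "\<forall>k<m. Wf r t xs k > 0" using Oxs unfolding inO_def n_def m_def by auto
  have globmin: "phi r t \<mu> xs \<le> phi r t \<mu> y" if "inO r t y" for y
  proof (cases "phi r t \<mu> y \<le> \<Phi>")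
    case True then show ?thesis using xsmin inK[OF that] by blast
  next
    case False then show ?thesis using xsmin xbK unfolding \<Phi>_def by force
  qed
  have xsd: "\<forall>j<n. \<delta> \<le> xs j" "\<forall>k<m. \<delta> \<le> Wf r t xs k" using xsK unfolding K_def by auto
  have grad: "LPc j / \<mu> - 1 / xs j + (\<Sum>k<m. LPA t k j / Wf r t xs k) = 0" if j: "j < n" for j
  proof -
    define g where "g h = (xs 1 + (if j = 1 then h else 0)) / \<mu> - (\<Sum>i<n. ln (xs i + (if i = j then h else 0)))
         - (\<Sum>k<m. ln (Wf r t xs k - h * LPA t k j))" for h
    have gphi: "g h = phi r t \<mu> (xs(j := xs j + h))" for h
    proof -
      have a: "(xs(j := xs j + h)) 1 = xs 1 + (if j = 1 then h else 0)" by auto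
      have b: "(\<Sum>i<n. ln ((xs(j := xs j + h)) i)) = (\<Sum>i<n. ln (xs i + (if i = j then h else 0)))"
        by (rule sum.cong) auto
      have c: "Wf r t (xs(j := xs j + h)) k = Wf r t xs k - h * LPA t k j" for k
        unfolding Wf_def using upd_sum[of j "nvar r" "LPA t k" xs h] j unfolding n_def by (simp add: algebra_simps)
      show ?thesis unfolding g_def phi_def a c n_def[symmetric] m_def[symmetric] b ..
    qed
    define A where "A = 1 + (\<Sum>k<m. \<bar>LPA t k j\<bar>)"
    have A1: "A \<ge> 1" unfolding A_def by (simp add: sum_nonneg)
    define \<rho> where "\<rho> = \<delta> / A"
    have rho: "\<rho> > 0" unfolding \<rho>_def using dpos A1 by simp
    have loc: "\<forall>h. \<bar>0 - h\<bar> < \<rho> \<longrightarrow> g 0 \<le> g h"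
    proof (intro allI impI)
      fix h assume h: "\<bar>0 - h\<bar> < \<rho>"
      have hA: "\<bar>h\<bar> * A < \<delta>" using h A1 unfolding \<rho>_def by (simp add: pos_less_divide_eq)
      have "\<bar>h\<bar> * 1 \<le> \<bar>h\<bar> * A" by (rule mult_left_mono) (use A1 in auto)
      then have hd: "\<bar>h\<bar> < \<delta>" using hA by linarith
      have "inO r t (xs(j := xs j + h))"
        unfolding inO_def
      proof (intro conjI allI impI)
        fix i assume i: "i < nvar r"
        show "(xs(j := xs j + h)) i > 0"
          using Oxs i xsd(1) j hd unfolding inO_def n_def by auto
      next
        fix k assume k: "k < ncon r"
        have "\<bar>LPA t k j\<bar> \<le> (\<Sum>k<m. \<bar>LPA t k j\<bar>)" by (rule member_le_sum) (use k in \<open>auto simp: m_def\<close>)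
        then have "\<bar>LPA t k j\<bar> \<le> A" unfolding A_def by simp
        then have "\<bar>h * LPA t k j\<bar> \<le> \<bar>h\<bar> * A" by (simp add: abs_mult mult_left_mono)
        then have "\<bar>h * LPA t k j\<bar> < \<delta>" using hA by linarith
        moreover have "Wf r t xs k \<ge> \<delta>" using xsd(2) k unfolding m_def by auto
        moreover have "Wf r t (xs(j := xs j + h)) k = Wf r t xs k - h * LPA t k j"
          unfolding Wf_def using upd_sum[of j "nvar r" "LPA t k" xs h] j unfolding n_def by (simp add: algebra_simps)
        ultimately show "Wf r t (xs(j := xs j + h)) k > 0" by linarith
      next
        fix i assume "nvar r \<le> i" then show "(xs(j := xs j + h)) i = 0" using Oxs j unfolding inO_def n_def by auto
      qed
      then have "phi r t \<mu> xs \<le> phi r t \<mu> (xs(j := xs j + h))" by (rule globmin)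
      moreover have "g 0 = phi r t \<mu> xs" using gphi[of 0] by simp
      ultimately show "g 0 \<le> g h" using gphi[of h] by simp
    qed
    have D: "(g has_real_derivative ((if j = 1 then 1 else 0) / \<mu> - (\<Sum>i<n. (if i = j then 1 else 0) / xs i)
              - (\<Sum>k<m. (- LPA t k j) / Wf r t xs k))) (at 0)"
    proof -
      have d1: "((\<lambda>h. xs 1 + (if j = 1 then h else 0)) has_real_derivative (if j = 1 then 1 else 0)) (at 0)"
        by (cases "j = 1") (auto intro!: derivative_eq_intros)
      have d2: "((\<lambda>h. ln (xs i + (if i = j then h else 0))) has_real_derivative (if i = j then 1 else 0) / xs i) (at 0)"
        if i: "i \<in> {..<n}" for i
        using xsp(1) i by (cases "i = j") (auto intro!: derivative_eq_intros)
      have d3: "((\<lambda>h. ln (Wf r t xs k - h * LPA t k j)) has_real_derivative (- LPA t k j) / Wf r t xs k) (at 0)"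
        if k: "k \<in> {..<m}" for k
        using xsp(2) k by (auto intro!: derivative_eq_intros)
      show ?thesis unfolding g_def
        by (intro DERIV_diff DERIV_cdivide d1 DERIV_sum d2 d3)
    qed
    have "(if j = 1 then 1 else 0) / \<mu> - (\<Sum>i<n. (if i = j then 1 else 0) / xs i)
              - (\<Sum>k<m. (- LPA t k j) / Wf r t xs k) = 0"
      by (rule DERIV_local_min[OF D rho loc])
    moreover have "(\<Sum>i<n. (if i = j then 1 else 0) / xs i) = 1 / xs j"
    proof -
      have "(\<Sum>i<n. (if i = j then 1 else 0) / xs i) = (\<Sum>i<n. (if i = j then 1 / xs j else 0))"
        by (rule sum.cong) auto
      then show ?thesis using j by simp
    qed
    moreover have "(\<Sum>k<m. (- LPA t k j) / Wf r t xs k) = - (\<Sum>k<m. LPA t k j / Wf r t xs k)"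
      by (simp add: sum_negf)
    moreover have "LPc j = (if j = 1 then 1 else 0)" by (simp add: LPc_def)
    ultimately show ?thesis by simp
  qed
  define w where "w k = (if k < m then Wf r t xs k else 0)" for k
  define y where "y k = (if k < m then \<mu> / Wf r t xs k else 0)" for k
  define s where "s j = (if j < n then \<mu> / xs j else 0)" for j
  have "cp_cond r t \<mu> xs w y s"
    unfolding cp_cond_def
  proof (intro conjI allI impI)
    fix k assume "k < ncon r" then show "(\<Sum>j<nvar r. LPA t k j * xs j) + w k = LPb t k"
      unfolding w_def Wf_def m_def by simp
  next
    fix j assume j: "j < nvar r"
    have "(\<Sum>k<ncon r. LPA t k j * y k) = \<mu> * (\<Sum>k<m. LPA t k j / Wf r t xs k)"
      unfolding y_def m_def by (simp add: sum_distrib_left mult.commute)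
    then show "- (\<Sum>k<ncon r. LPA t k j * y k) + s j = LPc j"
      using grad[of j] j mu unfolding s_def n_def by (simp add: field_simps)
  next
    fix k assume "k < ncon r" then show "w k * y k = \<mu>" unfolding w_def y_def using xsp(2) unfolding m_def by force
  next
    fix j assume "j < nvar r" then show "xs j * s j = \<mu>" unfolding s_def using xsp(1) unfolding n_def by force
  next
    fix j assume "j < nvar r" then show "xs j > 0" using xsp(1) unfolding n_def by force
  next
    fix j assume "j < nvar r" then show "s j > 0" unfolding s_def using xsp(1) mu unfolding n_def by force
  next
    fix k assume "k < ncon r" then show "w k > 0" unfolding w_def using xsp(2) unfolding m_def by force
  next
    fix k assume "k < ncon r" then show "y k > 0" unfolding y_def using xsp(2) mu unfolding m_def by force
  next
    fix j assume "nvar r \<le> j" then show "xs j = 0" using Oxs unfolding inO_def by simp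
  next
    fix j assume "nvar r \<le> j" then show "s j = 0" unfolding s_def n_def by simp
  next
    fix k assume "ncon r \<le> k" then show "w k = 0" unfolding w_def m_def by simp
  next
    fix k assume "ncon r \<le> k" then show "y k = 0" unfolding y_def m_def by simp
  qed
  then show ?thesis by blast
qed

lemma term_np:
  fixes x x' s s' \<mu> :: real
  assumes "x > 0" "x' > 0" "x * s = \<mu>" "x' * s' = \<mu>" "\<mu> > 0"
  shows "(x - x') * (s - s') \<le> 0" "(x - x') * (s - s') = 0 \<Longrightarrow> x = x'"
proof -
  have s: "s = \<mu> / x" "s' = \<mu> / x'" using assms by (auto simp: field_simps)
  have e: "(x - x') * (s - s') = - \<mu> * (x - x')^2 / (x * x')"
    unfolding s using assms by (simp add: field_simps power2_eq_square)
  show "(x - x') * (s - s') \<le> 0" unfolding e using assms by (simp add: divide_nonpos_pos)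
  assume "(x - x') * (s - s') = 0"
  then have "\<mu> * (x - x')^2 = 0" unfolding e using assms by simp
  then show "x = x'" using assms by simp
qed

lemma cp_unique:
  fixes \<mu> :: real
  assumes cp: "cp_cond r t \<mu> x w y s" and cp': "cp_cond r t \<mu> x' w' y' s'" and mu: "\<mu> > 0"
  shows "x = x' \<and> w = w' \<and> y = y' \<and> s = s'"
proof -
  note f = cp_feas[OF cp] and f' = cp_feas[OF cp']
  have e1: "(\<Sum>j<nvar r. x j * s j) + (\<Sum>k<ncon r. w k * y k) = (\<Sum>j<nvar r. LPc j * x j) + (\<Sum>k<ncon r. LPb t k * y k)"
    by (rule duality_sum[OF cp f])
  have e2: "(\<Sum>j<nvar r. x' j * s j) + (\<Sum>k<ncon r. w' k * y k) = (\<Sum>j<nvar r. LPc j * x' j) + (\<Sum>k<ncon r. LPb t k * y k)"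
    by (rule duality_sum[OF cp f'])
  have e3: "(\<Sum>j<nvar r. x j * s' j) + (\<Sum>k<ncon r. w k * y' k) = (\<Sum>j<nvar r. LPc j * x j) + (\<Sum>k<ncon r. LPb t k * y' k)"
    by (rule duality_sum[OF cp' f])
  have e4: "(\<Sum>j<nvar r. x' j * s' j) + (\<Sum>k<ncon r. w' k * y' k) = (\<Sum>j<nvar r. LPc j * x' j) + (\<Sum>k<ncon r. LPb t k * y' k)"
    by (rule duality_sum[OF cp' f'])
  define A where "A = (\<Sum>j<nvar r. (x j - x' j) * (s j - s' j))"
  define B where "B = (\<Sum>k<ncon r. (w k - w' k) * (y k - y' k))"
  have "A + B = ((\<Sum>j<nvar r. x j * s j) + (\<Sum>k<ncon r. w k * y k))
     - ((\<Sum>j<nvar r. x' j * s j) + (\<Sum>k<ncon r. w' k * y k))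
     - ((\<Sum>j<nvar r. x j * s' j) + (\<Sum>k<ncon r. w k * y' k))
     + ((\<Sum>j<nvar r. x' j * s' j) + (\<Sum>k<ncon r. w' k * y' k))"
    unfolding A_def B_def by (simp add: algebra_simps sum.distrib sum_subtractf)
  then have AB: "A + B = 0" unfolding e1 e2 e3 e4 by simp
  have px: "\<forall>j<nvar r. x j > 0 \<and> s j > 0 \<and> x' j > 0 \<and> s' j > 0 \<and> x j * s j = \<mu> \<and> x' j * s' j = \<mu>"
    using cp cp' unfolding cp_cond_def by auto
  have pw: "\<forall>k<ncon r. w k > 0 \<and> y k > 0 \<and> w' k > 0 \<and> y' k > 0 \<and> w k * y k = \<mu> \<and> w' k * y' k = \<mu>"
    using cp cp' unfolding cp_cond_def by auto
  have tA: "\<forall>j\<in>{..<nvar r}. (x j - x' j) * (s j - s' j) \<le> 0" using px term_np(1) mu by blast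
  have tB: "\<forall>k\<in>{..<ncon r}. (w k - w' k) * (y k - y' k) \<le> 0" using pw term_np(1) mu by blast
  have A0: "A \<le> 0" "B \<le> 0" unfolding A_def B_def using tA tB by (auto intro: sum_nonpos)
  then have "A = 0" "B = 0" using AB by auto
  then have "(\<Sum>j<nvar r. - ((x j - x' j) * (s j - s' j))) = 0" "(\<Sum>k<ncon r. - ((w k - w' k) * (y k - y' k))) = 0"
    unfolding A_def B_def by (simp_all add: sum_negf)
  then have z1: "\<forall>j\<in>{..<nvar r}. - ((x j - x' j) * (s j - s' j)) = 0"
        and z2: "\<forall>k\<in>{..<ncon r}. - ((w k - w' k) * (y k - y' k)) = 0"
    using tA tB by (subst (asm) sum_nonneg_eq_0_iff; force)+
  have xx: "x j = x' j \<and> s j = s' j" for j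
  proof (cases "j < nvar r")
    case True
    then have "x j = x' j" using term_np(2)[of "x j" "x' j" "s j" \<mu> "s' j"] px z1 mu by auto
    moreover have "s j = \<mu> / x j" "s' j = \<mu> / x' j" using px True by (auto simp: field_simps)
    ultimately show ?thesis by simp
  next
    case False then show ?thesis using cp cp' unfolding cp_cond_def by auto
  qed
  have ww: "w k = w' k \<and> y k = y' k" for k
  proof (cases "k < ncon r")
    case True
    then have "w k = w' k" using term_np(2)[of "w k" "w' k" "y k" \<mu> "y' k"] pw z2 mu by auto
    moreover have "y k = \<mu> / w k" "y' k = \<mu> / w' k" using pw True by (auto simp: field_simps)
    ultimately show ?thesis by simp
  next
    case False then show ?thesis using cp cp' unfolding cp_cond_def by auto
  qed
  show ?thesis using xx ww by auto
qed

lemma cp_point_eq: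
  fixes \<mu> :: real
  assumes cp: "cp_cond r t \<mu> x w y s" and mu: "\<mu> > 0"
  shows "cp_point r t \<mu> = (x, w, y, s)"
  unfolding cp_point_def
proof (rule the1_equality)
  show "\<exists>!p. case p of (x, w, y, s) \<Rightarrow> cp_cond r t \<mu> x w y s"
  proof (rule ex1I[of _ "(x, w, y, s)"])
    show "case (x, w, y, s) of (x, w, y, s) \<Rightarrow> cp_cond r t \<mu> x w y s" using cp by simp
    fix p assume "case p of (x, w, y, s) \<Rightarrow> cp_cond r t \<mu> x w y s"
    then show "p = (x, w, y, s)" using cp_unique[OF _ cp mu] by (cases p) auto
  qed
  show "case (x, w, y, s) of (x, w, y, s) \<Rightarrow> cp_cond r t \<mu> x w y s" using cp by simp
qed

lemma cp_point_cond:
  fixes \<mu> :: real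
  assumes "t \<ge> 2" "\<mu> > 0"
  obtains x w y s where "cp_point r t \<mu> = (x, w, y, s)" "cp_cond r t \<mu> x w y s"
  using cp_exists[OF assms, of r] cp_point_eq assms(2) by blast

lemma aa_eq: "aa i = 1 - (1/2)^i"
  unfolding aa_def by (simp add: powr_minus powr_realpow power_divide inverse_eq_divide)

fun trop :: "nat \<Rightarrow> real \<Rightarrow> real \<times> real" where
  "trop 0 l = (1, l)"
| "trop (Suc p) l = (1 + min (fst (trop p l)) (snd (trop p l)), aa (Suc p) + max (fst (trop p l)) (snd (trop p l)))"

definition Uf :: "nat \<Rightarrow> real \<Rightarrow> real" where "Uf p l = fst (trop p l)"
definition Vf :: "nat \<Rightarrow> real \<Rightarrow> real" where "Vf p l = snd (trop p l)"

lemma UV_simps: "Uf 0 l = 1" "Vf 0 l = l"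
  "Uf (Suc p) l = 1 + min (Uf p l) (Vf p l)" "Vf (Suc p) l = aa (Suc p) + max (Uf p l) (Vf p l)"
  by (simp_all add: Uf_def Vf_def)

fun Dt :: "nat \<Rightarrow> real \<Rightarrow> real" where
  "Dt 0 l = l - 1"
| "Dt (Suc k) l = \<bar>Dt k l\<bar> - (1/2)^(Suc k)"

lemma D_eq: "Vf p l - Uf p l = Dt p l"
proof (induction p)
  case 0 then show ?case by (simp add: UV_simps)
next
  case (Suc p)
  have "Vf (Suc p) l - Uf (Suc p) l = aa (Suc p) - 1 + (max (Uf p l) (Vf p l) - min (Uf p l) (Vf p l))"
    by (simp add: UV_simps)
  also have "max (Uf p l) (Vf p l) - min (Uf p l) (Vf p l) = \<bar>Dt p l\<bar>" using Suc by (auto simp: max_def min_def)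
  finally show ?case by (simp add: aa_eq)
qed

lemma D_lip: "\<bar>Dt k l - Dt k l'\<bar> \<le> \<bar>l - l'\<bar>"
proof (induction k)
  case 0 then show ?case by simp
next
  case (Suc k)
  have "\<bar>\<bar>Dt k l\<bar> - \<bar>Dt k l'\<bar>\<bar> \<le> \<bar>Dt k l - Dt k l'\<bar>" by (rule abs_triangle_ineq3)
  then show ?case using Suc by simp
qed

lemma D_grid: "j \<le> 2^(Suc q) \<Longrightarrow> Dt (Suc q) (real j / 2^q) = (-1)^j * (1/2)^(Suc q)"
proof (induction q arbitrary: j)
  case 0
  then have "j = 0 \<or> j = 1 \<or> j = 2" by auto
  then show ?case by auto
next
  case (Suc q)
  define c where "c = (1/2::real)^(Suc q)"
  have cpos: "c > 0" unfolding c_def by simp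
  show ?case
  proof (cases "even j")
    case True
    then obtain i where j: "j = 2*i" by auto
    have i: "i \<le> 2^(Suc q)" using Suc.prems j by simp
    have pt: "real j / 2^(Suc q) = real i / 2^q" unfolding j by (simp add: field_simps)
    have "Dt (Suc q) (real i / 2^q) = (-1)^i * c" using Suc.IH[OF i] unfolding c_def .
    then have "\<bar>Dt (Suc q) (real i / 2^q)\<bar> = c" using cpos by (simp add: abs_mult)
    then show ?thesis using j pt unfolding c_def by (simp add: power_mult)
  next
    case False
    then obtain i where j: "j = 2*i+1" using oddE by blast
    have i: "i \<le> 2^(Suc q)" "i + 1 \<le> 2^(Suc q)" using Suc.prems j by auto
    define a where "a = real i / 2^q"
    define b where "b = real (i+1) / 2^q"
    define mm where "mm = real j / 2^(Suc q)"
    have Da: "Dt (Suc q) a = (-1)^i * c" using Suc.IH[OF i(1)] unfolding c_def a_def .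
    have Db: "Dt (Suc q) b = - ((-1)^i * c)" using Suc.IH[OF i(2)] unfolding c_def b_def by simp
    have ma: "\<bar>mm - a\<bar> = c" unfolding mm_def a_def c_def j by (simp add: field_simps power_divide)
    have mb: "\<bar>mm - b\<bar> = c" unfolding mm_def b_def c_def j by (simp add: field_simps power_divide)
    have l1: "\<bar>Dt (Suc q) mm - Dt (Suc q) a\<bar> \<le> c" using D_lip[of "Suc q" mm a] ma by simp
    have l2: "\<bar>Dt (Suc q) mm - Dt (Suc q) b\<bar> \<le> c" using D_lip[of "Suc q" mm b] mb by simp
    have z: "Dt (Suc q) mm = 0"
    proof (cases "even i")
      case True then show ?thesis using l1 l2 Da Db by (simp add: abs_le_iff)
    next
      case False then show ?thesis using l1 l2 Da Db by (simp add: abs_le_iff)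
    qed
    show ?thesis using z j unfolding mm_def by simp
  qed
qed

lemma trop_mono: "l \<le> l' \<Longrightarrow> Uf p l \<le> Uf p l' \<and> Vf p l \<le> Vf p l'"
proof (induction p)
  case 0 then show ?case by (simp add: UV_simps)
next
  case (Suc p) then show ?case by (auto simp: UV_simps intro: min.mono max.mono)
qed

definition Sf :: "nat \<Rightarrow> real \<Rightarrow> real" where "Sf p l = max (Uf p l) (Vf p l)"

lemma aa_half: "i \<ge> 1 \<Longrightarrow> aa i \<ge> 1/2"
proof -
  assume "i \<ge> 1"
  then have "(1/2::real)^i \<le> (1/2)^1" by (intro power_decreasing) auto
  then show ?thesis by (simp add: aa_eq)
qed

lemma S_step: "Sf (Suc p) l \<ge> Sf p l + 1/2"
proof -
  have "Vf (Suc p) l \<ge> Sf p l + 1/2" using aa_half[of "Suc p"] by (simp add: UV_simps Sf_def)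
  then show ?thesis unfolding Sf_def by simp
qed

lemma S_incr: "p \<le> q \<Longrightarrow> Sf q l \<ge> Sf p l + real (q - p) / 2"
proof (induction q)
  case 0 then show ?case by simp
next
  case (Suc q)
  show ?case
  proof (cases "p = Suc q")
    case True then show ?thesis by simp
  next
    case False
    then have "p \<le> q" using Suc.prems by simp
    then have "Sf q l \<ge> Sf p l + real (q - p) / 2" by (rule Suc.IH)
    moreover have "real (Suc q - p) = real (q - p) + 1" using \<open>p \<le> q\<close> by simp
    ultimately show ?thesis using S_step[of q l] by (simp add: field_simps)
  qed
qed

lemma S0: "Sf 0 l \<ge> 1" by (simp add: Sf_def UV_simps)

lemma UV_le_S: "Uf p l \<le> Sf p l" "Vf p l \<le> Sf p l" by (auto simp: Sf_def)

lemma UV_nonneg: "l \<ge> 0 \<Longrightarrow> Uf p l \<ge> 0 \<and> Vf p l \<ge> 0"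
proof (induction p)
  case 0 then show ?case by (simp add: UV_simps)
next
  case (Suc p)
  have "aa (Suc p) \<ge> 0" using aa_bounds by simp
  then show ?case using Suc by (auto simp: UV_simps)
qed

abbreviation NM :: "nat \<Rightarrow> real" where "NM r \<equiv> real (nvar r + ncon r)"

lemma NM_ge: "NM r \<ge> 4" by (simp add: nvar_def ncon_def)

lemma powr_min: "(t::real) \<ge> 1 \<Longrightarrow> t powr (min a b) = min (t powr a) (t powr b)"
proof (cases "a \<le> b")
  case True
  assume "t \<ge> 1" then have "t powr a \<le> t powr b" using True by (intro powr_mono) auto
  then show ?thesis using True by (simp add: min.absorb1)
next
  case False
  assume "t \<ge> 1" then have "t powr b \<le> t powr a" using False by (intro powr_mono) auto
  then show ?thesis using False by (simp add: min.absorb2)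
qed

lemma powr_max: "(t::real) \<ge> 1 \<Longrightarrow> t powr (max a b) = max (t powr a) (t powr b)"
proof (cases "a \<le> b")
  case True
  assume "t \<ge> 1" then have "t powr a \<le> t powr b" using True by (intro powr_mono) auto
  then show ?thesis using True by (simp add: max.absorb2)
next
  case False
  assume "t \<ge> 1" then have "t powr b \<le> t powr a" using False by (intro powr_mono) auto
  then show ?thesis using False by (simp add: max.absorb1)
qed

lemma min_cmul: "0 \<le> (c::real) \<Longrightarrow> min (c*a) (c*b) = c * min a b"
  by (cases "c = 0") (auto simp: min_def mult_le_cancel_left)
lemma max_cmul: "0 \<le> (c::real) \<Longrightarrow> max (c*a) (c*b) = c * max a b"
  by (cases "c = 0") (auto simp: max_def mult_le_cancel_left)
lemma min_cdiv: "0 < (c::real) \<Longrightarrow> min (a/c) (b/c) = min a b / c"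
  by (simp add: min_def divide_le_cancel)
lemma max_cdiv: "0 < (c::real) \<Longrightarrow> max (a/c) (b/c) = max a b / c"
  by (simp add: max_def divide_le_cancel)

lemma v0_bounds:
  fixes \<mu> :: real
  assumes cp: "cp_cond r t \<mu> x w y s" and t: "t \<ge> 2" and mu: "\<mu> > 0" and H: "2 * NM r * \<mu> \<le> t^2"
  shows "\<mu> / 3 \<le> x 1" "x 1 \<le> NM r * \<mu>"
proof -
  have yp: "\<forall>k<ncon r. y k > 0" and xp: "\<forall>j<nvar r. x j > 0 \<and> s j > 0" and wp: "\<forall>k<ncon r. w k > 0"
    using cp unfolding cp_cond_def by auto
  have "(\<Sum>k<ncon r. LPb t k * y k) \<ge> 0"
    using yp t by (intro sum_nonneg) (auto simp: LPb_def)
  then show x1: "x 1 \<le> NM r * \<mu>" using gap_identity[OF cp] by linarith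
  have "1 * \<mu> \<le> (2 * NM r) * \<mu>" by (rule mult_right_mono) (use NM_ge[of r] mu in auto)
  then have m: "\<mu> \<le> t^2" using H by linarith
  have f: "x 1 + w 1 = t^2" using cp_feas[OF cp] unfolding feas_iff by auto
  have w1: "w 1 \<ge> t^2 / 2" using f x1 H by linarith
  have t2: "t^2 > 0" using t by simp
  have "w 1 * y 1 = \<mu>" and w1p: "w 1 > 0" using cp wp unfolding cp_cond_def by (auto simp: ncon_def)
  then have y1: "y 1 = \<mu> / w 1" by (simp add: field_simps)
  have y1b: "y 1 \<le> 2"
  proof -
    have "y 1 \<le> \<mu> / (t^2/2)" unfolding y1 using w1 mu t2 w1p by (intro divide_left_mono) auto
    also have "\<dots> \<le> 2" using m t2 by (simp add: field_simps)
    finally show ?thesis .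
  qed
  have s1: "s 1 = LPc 1 + (\<Sum>k<ncon r. LPA t k 1 * y k)"
  proof -
    have "- (\<Sum>k<ncon r. LPA t k 1 * y k) + s 1 = LPc 1" using cp one_lt_nvar unfolding cp_cond_def by blast
    then show ?thesis by linarith
  qed
  have "(\<Sum>k<ncon r. LPA t k 1 * y k) \<le> y 1"
  proof -
    have 1: "1 \<in> {..<ncon r}" by (simp add: ncon_def)
    have "(\<Sum>k<ncon r. LPA t k 1 * y k) = LPA t 1 1 * y 1 + (\<Sum>k\<in>{..<ncon r} - {1}. LPA t k 1 * y k)"
      by (rule sum.remove[OF _ 1]) simp
    also have "(\<Sum>k\<in>{..<ncon r} - {1}. LPA t k 1 * y k) \<le> 0"
      using col1_nonpos t yp by (intro sum_nonpos) (auto simp: mult_nonpos_nonneg less_imp_le)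
    also have "LPA t 1 1 = 1" by (simp add: LPA_def)
    finally show ?thesis by simp
  qed
  then have "s 1 \<le> 3" using s1 y1b by (simp add: LPc_def)
  moreover have "x 1 * s 1 = \<mu>" "s 1 > 0" "x 1 > 0" using cp xp one_lt_nvar unfolding cp_cond_def by auto
  ultimately have "x 1 * s 1 \<le> x 1 * 3" "x 1 * s 1 = \<mu>" by (auto intro: mult_left_mono)
  then show "\<mu> / 3 \<le> x 1" by linarith
qed

definition Kp :: "nat \<Rightarrow> nat \<Rightarrow> real" where "Kp r p = NM r * 2^p"
definition Gp :: "nat \<Rightarrow> real" where "Gp p = 3 * 2^p"

lemma ub_uv:
  fixes \<mu> :: real
  assumes cp: "cp_cond r t \<mu> x w y s" and t: "t \<ge> 2" and mu: "\<mu> = t powr l" and l: "l \<ge> 0"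
    and x1: "x 1 \<le> NM r * \<mu>"
  shows "p \<le> r \<Longrightarrow> x (2*p) \<le> Kp r p * t powr Uf p l \<and> x (2*p+1) \<le> Kp r p * t powr Vf p l"
proof (induction p)
  case 0
  have "x 0 + w 0 = t" using cp_feas[OF cp] unfolding feas_iff by auto
  moreover have "w 0 > 0" using cp unfolding cp_cond_def by (auto simp: ncon_def)
  ultimately have "x 0 \<le> t" by linarith
  moreover have "t \<le> NM r * t" using NM_ge[of r] t by simp
  moreover have "Kp r 0 * t powr Uf 0 l = NM r * t" using t by (simp add: Kp_def UV_simps)
  moreover have "Kp r 0 * t powr Vf 0 l = NM r * \<mu>" using mu by (simp add: Kp_def UV_simps)
  ultimately show ?case using x1 by simp
next
  case (Suc p)
  then have p: "p < r" by simp
  have IH: "x (2*p) \<le> Kp r p * t powr Uf p l" "x (2*p+1) \<le> Kp r p * t powr Vf p l" using Suc by auto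
  have xn: "\<forall>j<nvar r. x j \<ge> 0" and wn: "\<forall>k<ncon r. w k \<ge> 0" using cp unfolding cp_cond_def by (auto simp: less_imp_le)
  note ub = feas_ub[OF cp_feas[OF cp] xn wn p]
  have t1: "t \<ge> 1" "t > 0" using t by auto
  have K0: "Kp r p \<ge> 0" by (simp add: Kp_def)
  have a: "x (2*p+2) \<le> Kp r (Suc p) * t powr Uf (Suc p) l"
  proof -
    have "x (2*p+2) \<le> t * min (x (2*p)) (x (2*p+1))" using ub(1,2) by simp
    also have "\<dots> \<le> t * min (Kp r p * t powr Uf p l) (Kp r p * t powr Vf p l)"
      using IH t1 by (intro mult_left_mono min.mono) auto
    also have "\<dots> = Kp r p * (t * min (t powr Uf p l) (t powr Vf p l))" using K0 by (simp add: min_cmul)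
    also have "t * min (t powr Uf p l) (t powr Vf p l) = t powr Uf (Suc p) l"
      using t1 by (simp add: UV_simps powr_add powr_min[OF t1(1)])
    also have "Kp r p * t powr Uf (Suc p) l \<le> Kp r (Suc p) * t powr Uf (Suc p) l"
      by (intro mult_right_mono) (auto simp: Kp_def)
    finally show ?thesis .
  qed
  have b: "x (2*p+3) \<le> Kp r (Suc p) * t powr Vf (Suc p) l"
  proof -
    have "x (2*p+3) \<le> t powr aa (Suc p) * (x (2*p) + x (2*p+1))" using ub(3) by simp
    also have "\<dots> \<le> t powr aa (Suc p) * (2 * (Kp r p * max (t powr Uf p l) (t powr Vf p l)))"
    proof -
      have "Kp r p * t powr Uf p l \<le> Kp r p * max (t powr Uf p l) (t powr Vf p l)"
           "Kp r p * t powr Vf p l \<le> Kp r p * max (t powr Uf p l) (t powr Vf p l)"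
        using K0 by (auto intro: mult_left_mono)
      then have "x (2*p) + x (2*p+1) \<le> 2 * (Kp r p * max (t powr Uf p l) (t powr Vf p l))"
        using IH by linarith
      then show ?thesis by (intro mult_left_mono) auto
    qed
    also have "\<dots> = Kp r (Suc p) * (t powr aa (Suc p) * max (t powr Uf p l) (t powr Vf p l))"
      by (simp add: Kp_def)
    also have "t powr aa (Suc p) * max (t powr Uf p l) (t powr Vf p l) = t powr Vf (Suc p) l"
      by (simp add: UV_simps powr_add powr_max[OF t1(1)])
    finally show ?thesis .
  qed
  show ?case using a b by (simp add: numeral_eq_Suc add.commute)
qed

lemma lb_gr:
  assumes t: "t \<ge> 2" and nu: "\<nu> \<ge> t powr l / 3"
  shows "fst (gr t \<nu> p) \<ge> t powr Uf p l / Gp p \<and> snd (gr t \<nu> p) \<ge> t powr Vf p l / Gp p"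
proof (induction p)
  case 0 then show ?case using nu t by (simp add: Gp_def UV_simps)
next
  case (Suc p)
  have t1: "t \<ge> 1" "t > 0" using t by auto
  have G: "Gp (Suc p) = 2 * Gp p" "Gp p > 0" by (simp_all add: Gp_def)
  have a: "fst (gr t \<nu> (Suc p)) \<ge> t powr Uf (Suc p) l / Gp (Suc p)"
  proof -
    have "t powr Uf (Suc p) l / Gp (Suc p) = t * min (t powr Uf p l / Gp p) (t powr Vf p l / Gp p) / 2"
      using G t1 by (simp add: UV_simps powr_add powr_min[OF t1(1)] min_cdiv)
    also have "\<dots> \<le> t * min (fst (gr t \<nu> p)) (snd (gr t \<nu> p)) / 2"
      using Suc t1 by (intro divide_right_mono mult_left_mono min.mono) auto
    finally show ?thesis by simp
  qed
  have b: "snd (gr t \<nu> (Suc p)) \<ge> t powr Vf (Suc p) l / Gp (Suc p)"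
  proof -
    have "t powr Vf (Suc p) l / Gp (Suc p) = t powr aa (Suc p) * max (t powr Uf p l / Gp p) (t powr Vf p l / Gp p) / 2"
      using G t1 by (simp add: UV_simps powr_add powr_max[OF t1(1)] max_cdiv)
    also have "\<dots> \<le> t powr aa (Suc p) * (fst (gr t \<nu> p) + snd (gr t \<nu> p)) / 2"
    proof -
      have "max (t powr Uf p l / Gp p) (t powr Vf p l / Gp p) \<le> fst (gr t \<nu> p) + snd (gr t \<nu> p)"
      proof -
        have "t powr Uf p l / Gp p \<ge> 0" "t powr Vf p l / Gp p \<ge> 0" using G by auto
        then show ?thesis using Suc by (auto simp: max_def)
      qed
      then show ?thesis by (intro divide_right_mono mult_left_mono) auto
    qed
    finally show ?thesis by simp
  qed
  show ?case using a b by simp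
qed

definition KK :: "nat \<Rightarrow> real" where "KK r = NM r * 2^r * Gp r"
definition gg :: "nat \<Rightarrow> real" where "gg r = (1/2)^r"
definition EE :: "nat \<Rightarrow> real \<Rightarrow> real" where "EE r l = 1 + Sf (r-1) l"
definition M2 :: "nat \<Rightarrow> real \<Rightarrow> real \<Rightarrow> real" where
  "M2 r t l = max (t powr (EE r l - gg r)) (t powr (1 + min (Uf (r-1) l) (Vf (r-1) l)))"


lemma Gp_ge: "Gp p \<ge> 3" by (simp add: Gp_def)
lemma Gp_mono: "p \<le> q \<Longrightarrow> Gp p \<le> Gp q" by (simp add: Gp_def)

lemma KK_ge1: "KK r \<ge> NM r * Gp r"
proof -
  have "(1::real) \<le> 2^r" by simp
  then have "NM r * Gp r * 1 \<le> NM r * Gp r * 2^r" by (intro mult_left_mono) (auto simp: Gp_def)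
  then show ?thesis by (simp add: KK_def algebra_simps)
qed

lemma KK_ge2: "p \<le> r \<Longrightarrow> KK r \<ge> Kp r p"
proof -
  assume p: "p \<le> r"
  have "(2::real)^p \<le> 2^r" using p by (intro power_increasing) auto
  then have "NM r * 2^p * 1 \<le> NM r * 2^r * Gp r" using Gp_ge[of r]
    by (intro mult_mono) auto
  then show ?thesis by (simp add: KK_def Kp_def)
qed

lemma KK_ge3: "KK r \<ge> 1"
proof -
  have "1*1 \<le> NM r * Gp r" by (rule mult_mono) (use NM_ge[of r] Gp_ge[of r] in auto)
  then show ?thesis using KK_ge1[of r] by simp
qed

lemma comb_bound:
  fixes t K X Y :: real
  assumes "X \<le> K * t powr U" "Y \<le> K * t powr V" "K \<ge> 0" "t \<ge> 1"
  shows "t powr a * (X + Y) \<le> 2 * K * t powr (a + max U V)"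
proof -
  have "K * t powr U \<le> K * max (t powr U) (t powr V)" "K * t powr V \<le> K * max (t powr U) (t powr V)"
    using assms(3) by (auto intro: mult_left_mono)
  then have "X + Y \<le> 2 * (K * max (t powr U) (t powr V))" using assms(1,2) by linarith
  then have "t powr a * (X + Y) \<le> t powr a * (2 * (K * max (t powr U) (t powr V)))"
    by (intro mult_left_mono) auto
  also have "\<dots> = 2 * K * (t powr a * max (t powr U) (t powr V))" by simp
  also have "t powr a * max (t powr U) (t powr V) = t powr (a + max U V)"
    using assms(4) by (simp add: powr_add powr_max)
  finally show ?thesis .
qed

lemma expo_facts:
  assumes r: "r \<ge> 2"
  shows "EE r l \<ge> 5/2" "gg r \<le> 1/4" "gg r > 0"
    "p \<le> r - 1 \<Longrightarrow> Sf p l \<le> EE r l - 1"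
    "p < r - 1 \<Longrightarrow> Sf p l + 1/2 \<le> EE r l - 1"
    "Uf r l = 1 + min (Uf (r-1) l) (Vf (r-1) l)"
    "Vf r l = EE r l - gg r"
    "p < r \<Longrightarrow> Vf (Suc p) l \<le> EE r l - gg r"
proof -
  obtain q where rq: "r = Suc (Suc q)" using r by (metis add_2_eq_Suc le_Suc_ex)
  have "Sf (r-1) l \<ge> Sf 0 l + real (r - 1 - 0) / 2" by (rule S_incr) simp
  moreover have "real (r - 1 - 0) \<ge> 1" using r by simp
  ultimately have "Sf (r-1) l \<ge> 3/2" using S0[of l] by linarith
  then show "EE r l \<ge> 5/2" unfolding EE_def by simp
  have "(1/2::real)^r \<le> (1/2)^2" using r by (intro power_decreasing) auto
  then show "gg r \<le> 1/4" unfolding gg_def by (simp add: power2_eq_square)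
  show "gg r > 0" by (simp add: gg_def)
  show "p \<le> r - 1 \<Longrightarrow> Sf p l \<le> EE r l - 1"
    using S_incr[of p "r-1" l] unfolding EE_def by simp
  show "p < r - 1 \<Longrightarrow> Sf p l + 1/2 \<le> EE r l - 1"
  proof -
    assume p: "p < r - 1"
    have "Sf (r-1) l \<ge> Sf p l + real (r - 1 - p) / 2" by (rule S_incr) (use p in simp)
    moreover have "real (r - 1 - p) \<ge> 1" using p by simp
    ultimately have "Sf p l + 1/2 \<le> Sf (r-1) l" by linarith
    then show ?thesis unfolding EE_def by simp
  qed
  show "Uf r l = 1 + min (Uf (r-1) l) (Vf (r-1) l)" using rq by (simp add: UV_simps)
  show vr: "Vf r l = EE r l - gg r" using rq by (simp add: UV_simps aa_eq EE_def gg_def Sf_def)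
  show "p < r \<Longrightarrow> Vf (Suc p) l \<le> EE r l - gg r"
  proof -
    assume p: "p < r"
    have "(1/2::real)^r \<le> (1/2)^(Suc p)" using p by (intro power_decreasing) auto
    then have "aa (Suc p) \<le> aa r" by (simp add: aa_eq)
    moreover have "Sf p l \<le> Sf (r-1) l"
    proof -
      have "Sf (r-1) l \<ge> Sf p l + real (r - 1 - p) / 2" by (rule S_incr) (use p in simp)
      moreover have "real (r - 1 - p) \<ge> 0" by simp
      ultimately show ?thesis by linarith
    qed
    ultimately have "Vf (Suc p) l \<le> aa r + Sf (r-1) l" unfolding UV_simps Sf_def[symmetric] by linarith
    also have "aa r + Sf (r-1) l = EE r l - gg r" by (simp add: aa_eq EE_def gg_def)
    finally show ?thesis .
  qed
qed

lemma hb: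
  assumes "X \<le> Kp r p * t powr a" "p \<le> r" "t powr a \<le> M"
  shows "X \<le> KK r * M"
proof -
  have "Kp r p * t powr a \<le> KK r * t powr a" using KK_ge2[OF assms(2)] by (intro mult_right_mono) auto
  also have "\<dots> \<le> KK r * M" using assms(3) KK_ge3[of r] by (intro mult_left_mono) auto
  finally show ?thesis using assms(1) by linarith
qed

lemma Kp_Suc: "Kp r (Suc p) = 2 * Kp r p" by (simp add: Kp_def)

lemma cp_bounds:
  fixes \<mu> :: real
  assumes r: "r \<ge> 2" and t: "t \<ge> 2" and l: "l \<ge> 0" and mu: "\<mu> = t powr l"
    and H: "2 * NM r * \<mu> \<le> t^2" and cp: "cp_cond r t \<mu> x w y s"
  shows "\<forall>j<nvar r. 0 < x j \<and> x j \<le> KK r * M2 r t l"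
    "\<forall>k<ncon r. k \<noteq> 3*r-1 \<and> k \<noteq> 3*r \<longrightarrow> 0 < w k \<and> w k \<le> KK r * M2 r t l"
    "\<forall>k<ncon r. 0 < y k \<and> y k \<le> KK r * M2 r t l"
    "\<forall>j<nvar r. 0 < s j \<and> s j \<le> KK r * M2 r t l"
    "t powr (1 + Uf (r-1) l) / KK r \<le> w (3*r-1)" "w (3*r-1) \<le> KK r * t powr (1 + Uf (r-1) l)"
    "t powr (1 + Vf (r-1) l) / KK r \<le> w (3*r)" "w (3*r) \<le> KK r * t powr (1 + Vf (r-1) l)"
proof -
  obtain q where rq: "r = Suc q" using r by (cases r) auto
  have t1: "t \<ge> 1" "t > 0" using t by auto
  have mu0: "\<mu> > 0" using mu t by simp
  note ef = expo_facts[OF r]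
  have pos: "\<forall>j<nvar r. 0 < x j \<and> 0 < s j" "\<forall>k<ncon r. 0 < w k \<and> 0 < y k"
    using cp unfolding cp_cond_def by auto
  have xn: "\<forall>j<nvar r. x j \<ge> 0" and wn: "\<forall>k<ncon r. w k \<ge> 0" using pos by (auto simp: less_imp_le)
  note v0 = v0_bounds[OF cp t mu0 H]
  note ub = ub_uv[OF cp t mu l v0(2)]
  have mA: "t powr a \<le> M2 r t l" if "a \<le> EE r l - gg r" for a
    using powr_mono[OF that t1(1)] unfolding M2_def by simp
  have mB: "t powr (1 + min (Uf (r-1) l) (Vf (r-1) l)) \<le> M2 r t l" unfolding M2_def by simp
  have Sle: "Uf p l \<le> EE r l - gg r \<and> Vf p l \<le> EE r l - gg r" if "p \<le> r - 1" for p
    using ef(2) ef(4)[OF that, of l] UV_le_S[of p l] by linarith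
  have NMmu: "NM r * \<mu> \<le> t^2 / 2" using H by (simp add: algebra_simps)
  have mut: "\<mu> \<le> t powr 2"
  proof -
    have "1 * \<mu> \<le> NM r * \<mu>" using NM_ge[of r] mu0 by (intro mult_right_mono) auto
    then have "\<mu> \<le> t^2" using NMmu zero_le_power2[of t] by linarith
    then show ?thesis using t1 by (simp add: powr_realpow)
  qed
  have t2M: "t powr 2 \<le> M2 r t l" by (rule mA) (use ef(1)[of l] ef(2) in linarith)
  show BX: "\<forall>j<nvar r. 0 < x j \<and> x j \<le> KK r * M2 r t l"
  proof (intro allI impI conjI)
    fix j assume j: "j < nvar r"
    show "0 < x j" using pos j by auto
    have "j div 2 \<le> r \<and> (j = 2*(j div 2) \<or> j = 2*(j div 2)+1)" using j unfolding nvar_def by presburger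
    then obtain p where p: "p \<le> r" "j = 2*p \<or> j = 2*p+1" by blast
    show "x j \<le> KK r * M2 r t l"
    proof (cases "p = r")
      case True
      show ?thesis using p(2)
      proof
        assume "j = 2*p"
        then show ?thesis using ub[OF p(1)] True ef(6)[of l] mB by (intro hb[where p=r and a="Uf r l"]) auto
      next
        assume "j = 2*p+1"
        then show ?thesis using ub[OF p(1)] True ef(7)[of l] mA by (intro hb[where p=r and a="Vf r l"]) auto
      qed
    next
      case False
      then have p1: "p \<le> r - 1" using p(1) by simp
      show ?thesis using p(2)
      proof
        assume "j = 2*p"
        then show ?thesis using ub[OF p(1)] p Sle[OF p1] mA by (intro hb[where p=p and a="Uf p l"]) auto
      next
        assume "j = 2*p+1"
        then show ?thesis using ub[OF p(1)] p Sle[OF p1] mA by (intro hb[where p=p and a="Vf p l"]) auto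
      qed
    qed
  qed
  have f: "feas r t x w" by (rule cp_feas[OF cp])
  have e0: "x 0 + w 0 = t" "x 1 + w 1 = t^2" using f unfolding feas_iff by auto
  show "\<forall>k<ncon r. k \<noteq> 3*r-1 \<and> k \<noteq> 3*r \<longrightarrow> 0 < w k \<and> w k \<le> KK r * M2 r t l"
  proof (intro allI impI conjI)
    fix k assume k: "k < ncon r" and kz: "k \<noteq> 3*r-1 \<and> k \<noteq> 3*r"
    show "0 < w k" using pos k by auto
    consider "k = 0" | "k = 1" | p where "p < r" "k = 3*p+2 \<or> k = 3*p+3 \<or> k = 3*p+4"
      using row_cases[OF k] by blast
    then show "w k \<le> KK r * M2 r t l"
    proof cases
      case 1
      have h1: "w 0 \<le> Kp r 0 * t powr 1"
      proof -
        have "w 0 \<le> t" using e0 xn by (auto simp: nvar_def)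
        moreover have "t \<le> Kp r 0 * t" using NM_ge[of r] t1 by (simp add: Kp_def)
        ultimately have "w 0 \<le> Kp r 0 * t" by linarith
        then show ?thesis using t1 by simp
      qed
      have h2: "t powr 1 \<le> M2 r t l" by (rule mA) (use ef(1)[of l] ef(2) in linarith)
      have "w 0 \<le> KK r * M2 r t l" by (rule hb[OF h1 le0 h2])
      then show ?thesis using 1 by simp
    next
      case 2
      have h1: "w 1 \<le> Kp r 0 * t powr 2"
      proof -
        have "w 1 \<le> t^2" using e0 xn by (auto simp: nvar_def)
        moreover have "t^2 \<le> Kp r 0 * t^2" using NM_ge[of r] t1 by (simp add: Kp_def)
        ultimately have "w 1 \<le> Kp r 0 * t^2" by linarith
        then show ?thesis using t1 by (simp add: powr_realpow)
      qed
      have "w 1 \<le> KK r * M2 r t l" by (rule hb[OF h1 le0 t2M])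
      then show ?thesis using 2 by simp
    next
      case (3 p)
      note u = feas_ub[OF f xn wn 3(1)]
      have p1: "p \<le> r - 1" "p \<le> r" using 3(1) by auto
      have IH: "x (2*p) \<le> Kp r p * t powr Uf p l" "x (2*p+1) \<le> Kp r p * t powr Vf p l" using ub[OF p1(2)] by auto
      show ?thesis using 3(2)
      proof (elim disjE)
        assume kk: "k = 3*p+2"
        then have pr: "p < r - 1" using kz 3(1) rq by auto
        have "w k \<le> Kp r p * t powr (1 + Uf p l)"
        proof -
          have "w k \<le> t * x (2*p)" using u(4) kk by simp
          also have "\<dots> \<le> t * (Kp r p * t powr Uf p l)" using IH t1 by (intro mult_left_mono) auto
          also have "\<dots> = Kp r p * t powr (1 + Uf p l)" using t1 by (simp add: powr_add)
          finally show ?thesis .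
        qed
        moreover have "1 + Uf p l \<le> EE r l - gg r" using ef(2) ef(5)[OF pr, of l] UV_le_S[of p l] by linarith
        ultimately show ?thesis using p1 mA by (intro hb[where p=p and a="1 + Uf p l"]) auto
      next
        assume kk: "k = 3*p+3"
        then have pr: "p < r - 1" using kz 3(1) rq by auto
        have "w k \<le> Kp r p * t powr (1 + Vf p l)"
        proof -
          have "w k \<le> t * x (2*p+1)" using u(5) kk by simp
          also have "\<dots> \<le> t * (Kp r p * t powr Vf p l)" using IH t1 by (intro mult_left_mono) auto
          also have "\<dots> = Kp r p * t powr (1 + Vf p l)" using t1 by (simp add: powr_add)
          finally show ?thesis .
        qed
        moreover have "1 + Vf p l \<le> EE r l - gg r" using ef(2) ef(5)[OF pr, of l] UV_le_S[of p l] by linarith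
        ultimately show ?thesis using p1 mA by (intro hb[where p=p and a="1 + Vf p l"]) auto
      next
        assume kk: "k = 3*p+4"
        have "w k \<le> Kp r (Suc p) * t powr Vf (Suc p) l"
        proof -
          have "w k \<le> t powr aa (Suc p) * (x (2*p) + x (2*p+1))" using u(6) kk by simp
          also have "\<dots> \<le> 2 * Kp r p * t powr (aa (Suc p) + max (Uf p l) (Vf p l))"
            using IH t1 by (intro comb_bound) (auto simp: Kp_def)
          also have "\<dots> = Kp r (Suc p) * t powr Vf (Suc p) l" by (simp add: Kp_Suc UV_simps)
          finally show ?thesis .
        qed
        then show ?thesis using 3(1) mA ef(8)[OF 3(1), of l] by (intro hb[where p="Suc p" and a="Vf (Suc p) l"]) auto
      qed
    qed
  qed
  define \<nu> where "\<nu> = x 1"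
  have nu1: "\<nu> \<ge> t powr l / 3" using v0(1) mu unfolding \<nu>_def by simp
  have nu2: "\<nu> > 0" using pos one_lt_nvar unfolding \<nu>_def by auto
  have tt: "t^2 \<ge> 4" using t1 mult_mono[OF t t] by (simp add: power2_eq_square)
  have nu3: "\<nu> \<le> t^2 / 2" using v0(2) NMmu unfolding \<nu>_def by linarith
  have nu4: "\<nu> < t^2" using nu3 tt by linarith
  have gxn: "\<forall>j<nvar r. gx r t \<nu> j \<ge> 0" using gx_pos[OF t1(2) nu2] by (auto simp: less_imp_le)
  have gwn: "\<forall>k<ncon r. gw r t \<nu> k \<ge> 0" using gw_pos[OF t1(2) nu2 nu4] by (auto simp: less_imp_le)
  have g1: "gx r t \<nu> 1 \<le> x 1" using gx_v[of 0 r t \<nu>] unfolding \<nu>_def by simp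
  have zt: "\<forall>j<nvar r. gx r t \<nu> j \<le> NM r * x j" "\<forall>k<ncon r. gw r t \<nu> k \<le> NM r * w k"
    using ztrick[OF cp gfeas _ gxn gwn g1] t1 by auto
  have GP: "Gp r > 0" "Gp p > 0" for p by (auto simp: Gp_def)
  have lbc: "fst (gr t \<nu> p) \<ge> 1 / Gp r \<and> snd (gr t \<nu> p) \<ge> 1 / Gp r" if p: "p \<le> r" for p
  proof -
    have a: "fst (gr t \<nu> p) \<ge> t powr Uf p l / Gp p" "snd (gr t \<nu> p) \<ge> t powr Vf p l / Gp p"
      using lb_gr[OF t nu1] by auto
    have b: "t powr Uf p l \<ge> 1" "t powr Vf p l \<ge> 1" using UV_nonneg[OF l, of p] t1 by (auto intro: ge_one_powr_ge_zero)
    have c: "1 / Gp r \<le> 1 / Gp p" using Gp_mono[OF p] GP by (intro divide_left_mono) auto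
    have d: "1 / Gp p \<le> t powr Uf p l / Gp p" "1 / Gp p \<le> t powr Vf p l / Gp p"
      using b divide_right_mono[of 1 _ "Gp p"] GP(2)[of p] by auto
    show ?thesis using a c d by linarith
  qed
  have gxl: "\<forall>j<nvar r. gx r t \<nu> j \<ge> 1 / Gp r"
  proof (intro allI impI)
    fix j assume j: "j < nvar r"
    have "j div 2 \<le> r" using j unfolding nvar_def by simp
    then show "gx r t \<nu> j \<ge> 1 / Gp r" using lbc j unfolding gx_def by auto
  qed
  have gwl: "\<forall>k<ncon r. gw r t \<nu> k \<ge> 1 / Gp r"
  proof (intro allI impI)
    fix k assume k: "k < ncon r"
    have G1: "1 / Gp r \<le> 1" using Gp_ge[of r] by simp
    consider "k = 0" | "k = 1" | p where "p < r" "k = 3*p+2 \<or> k = 3*p+3 \<or> k = 3*p+4"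
      using row_cases[OF k] by blast
    then show "gw r t \<nu> k \<ge> 1 / Gp r"
    proof cases
      case 1 then show ?thesis using gw_vals(1)[OF t1(2) nu2, of r] G1 t by simp
    next
      case 2 then show ?thesis using gw_vals(2)[OF t1(2) nu2, of r] G1 nu3 tt by simp
    next
      case (3 p)
      have l1: "fst (gr t \<nu> p) \<ge> 1 / Gp r" "snd (gr t \<nu> p) \<ge> 1 / Gp r" "snd (gr t \<nu> (Suc p)) \<ge> 1 / Gp r"
        using lbc[of p] lbc[of "Suc p"] 3(1) by (auto simp del: gr.simps)
      have l2: "t * fst (gr t \<nu> p) / 2 \<ge> fst (gr t \<nu> p)" "t * snd (gr t \<nu> p) / 2 \<ge> snd (gr t \<nu> p)"
        using gr_pos[OF t1(2) nu2, of p] t by auto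
      show ?thesis using 3(2)
      proof (elim disjE)
        assume "k = 3*p+2" then show ?thesis using gw_vals(3)[OF t1(2) nu2 3(1)] l1 l2 by simp
      next
        assume "k = 3*p+3" then show ?thesis using gw_vals(4)[OF t1(2) nu2 3(1)] l1 l2 by simp
      next
        assume "k = 3*p+4" then show ?thesis using gw_vals(5)[OF t1(2) nu2 3(1)] l1 by (simp del: gr.simps)
      qed
    qed
  qed
  define c where "c = 1 / (NM r * Gp r)"
  have cpos: "c > 0" unfolding c_def using NM_ge[of r] GP by simp
  have NMG: "NM r * Gp r > 0" using NM_ge[of r] GP by simp
  have xl: "\<forall>j<nvar r. x j \<ge> c"
  proof (intro allI impI)
    fix j assume j: "j < nvar r"
    have "1 / Gp r \<le> NM r * x j" using gxl zt j by force
    then have "(1 / Gp r) / NM r \<le> (NM r * x j) / NM r" using NM_ge[of r] by (intro divide_right_mono) auto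
    then show "x j \<ge> c" unfolding c_def using NM_ge[of r] by (simp add: mult.commute)
  qed
  have wl: "\<forall>k<ncon r. w k \<ge> c"
  proof (intro allI impI)
    fix k assume k: "k < ncon r"
    have "1 / Gp r \<le> NM r * w k" using gwl zt k by force
    then have "(1 / Gp r) / NM r \<le> (NM r * w k) / NM r" using NM_ge[of r] by (intro divide_right_mono) auto
    then show "w k \<ge> c" unfolding c_def using NM_ge[of r] by (simp add: mult.commute)
  qed
  have dual: "\<mu> / z \<le> KK r * M2 r t l" if "z \<ge> c" for z
  proof -
    have "\<mu> / z \<le> \<mu> / c" using that cpos mu0 by (intro divide_left_mono) auto
    also have "\<dots> = (NM r * Gp r) * \<mu>" unfolding c_def by simp
    also have "\<dots> \<le> KK r * \<mu>" using KK_ge1[of r] mu0 by (intro mult_right_mono) auto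
    also have "\<dots> \<le> KK r * M2 r t l" using mut t2M KK_ge3[of r] by (intro mult_left_mono) auto
    finally show ?thesis .
  qed
  show "\<forall>k<ncon r. 0 < y k \<and> y k \<le> KK r * M2 r t l"
  proof (intro allI impI conjI)
    fix k assume k: "k < ncon r"
    show "0 < y k" using pos k by auto
    have "y k = \<mu> / w k" using cp k pos unfolding cp_cond_def by (auto simp: field_simps)
    then show "y k \<le> KK r * M2 r t l" using dual wl k by auto
  qed
  show "\<forall>j<nvar r. 0 < s j \<and> s j \<le> KK r * M2 r t l"
  proof (intro allI impI conjI)
    fix j assume j: "j < nvar r"
    show "0 < s j" using pos j by auto
    have "s j = \<mu> / x j" using cp j pos unfolding cp_cond_def by (auto simp: field_simps)
    then show "s j \<le> KK r * M2 r t l" using dual xl j by auto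
  qed
  have qq: "3*r-1 = 3*q+2" "3*r = 3*q+3" "r - 1 = q" "q < r" "q \<le> r" using rq by auto
  note u = feas_ub[OF f xn wn qq(4)]
  have IH: "x (2*q) \<le> Kp r q * t powr Uf q l" "x (2*q+1) \<le> Kp r q * t powr Vf q l" using ub[OF qq(5)] by auto
  have GG: "Gp r = 2 * Gp q" using rq by (simp add: Gp_def)
  have lg: "fst (gr t \<nu> q) \<ge> t powr Uf q l / Gp q" "snd (gr t \<nu> q) \<ge> t powr Vf q l / Gp q"
    using lb_gr[OF t nu1] by auto
  have KKt: "Kp r q * t powr a \<le> KK r * t powr a" for a using KK_ge2[OF qq(5)] by (intro mult_right_mono) auto
  have lowz: "t powr (1 + a) / KK r \<le> W" if "t powr a / Gp q \<le> G" "t * G / 2 \<le> gW" "gW \<le> NM r * W" for a G gW W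
  proof -
    have "t powr (1 + a) / KK r \<le> t powr (1 + a) / (NM r * Gp r)"
      using KK_ge1[of r] NMG by (intro divide_left_mono) auto
    also have "\<dots> = (t * (t powr a / Gp q) / 2) / NM r" using GG t1 by (simp add: powr_add field_simps)
    also have "\<dots> \<le> (t * G / 2) / NM r" using that(1) t1 NM_ge[of r] by (intro divide_right_mono mult_left_mono) auto
    also have "\<dots> \<le> gW / NM r" using that(2) NM_ge[of r] by (intro divide_right_mono) auto
    also have "\<dots> \<le> W" using that(3) NM_ge[of r] by (simp add: field_simps)
    finally show ?thesis .
  qed
  show "t powr (1 + Uf (r-1) l) / KK r \<le> w (3*r-1)"
    unfolding qq(1,3) by (rule lowz[OF lg(1) gw_vals(3)[OF t1(2) nu2 qq(4)]]) (use zt qq in \<open>auto simp: ncon_def\<close>)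
  show "t powr (1 + Vf (r-1) l) / KK r \<le> w (3*r)"
    unfolding qq(2,3) by (rule lowz[OF lg(2) gw_vals(4)[OF t1(2) nu2 qq(4)]]) (use zt qq in \<open>auto simp: ncon_def\<close>)
  show "w (3*r-1) \<le> KK r * t powr (1 + Uf (r-1) l)"
  proof -
    have "w (3*q+2) \<le> t * x (2*q)" by (rule u(4))
    also have "\<dots> \<le> t * (Kp r q * t powr Uf q l)" using IH t1 by (intro mult_left_mono) auto
    also have "\<dots> = Kp r q * t powr (1 + Uf q l)" using t1 by (simp add: powr_add)
    also have "\<dots> \<le> KK r * t powr (1 + Uf q l)" by (rule KKt)
    finally show ?thesis unfolding qq(1,3) .
  qed
  show "w (3*r) \<le> KK r * t powr (1 + Vf (r-1) l)"
  proof -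
    have "w (3*q+3) \<le> t * x (2*q+1)" by (rule u(5))
    also have "\<dots> \<le> t * (Kp r q * t powr Vf q l)" using IH t1 by (intro mult_left_mono) auto
    also have "\<dots> = Kp r q * t powr (1 + Vf q l)" using t1 by (simp add: powr_add)
    also have "\<dots> \<le> KK r * t powr (1 + Vf q l)" by (rule KKt)
    finally show ?thesis unfolding qq(2,3) .
  qed
qed

definition iz :: "nat \<Rightarrow> nat" where "iz r = nvar r + (3*r - 1)"
definition iz' :: "nat \<Rightarrow> nat" where "iz' r = nvar r + 3*r"

lemma pd_bounds:
  assumes r: "r \<ge> 2" and t: "t \<ge> 2" and l: "l \<ge> 0" and H: "2 * NM r * t powr l \<le> t^2"
  shows "\<forall>i<pd_dim r. 0 \<le> pd_path r t l i \<and> (i \<noteq> iz r \<and> i \<noteq> iz' r \<longrightarrow> pd_path r t l i \<le> KK r * M2 r t l)"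
    "t powr (1 + Uf (r-1) l) / KK r \<le> pd_path r t l (iz r)" "pd_path r t l (iz r) \<le> KK r * t powr (1 + Uf (r-1) l)"
    "t powr (1 + Vf (r-1) l) / KK r \<le> pd_path r t l (iz' r)" "pd_path r t l (iz' r) \<le> KK r * t powr (1 + Vf (r-1) l)"
    "\<forall>i<p_dim r. p_path r t l i = pd_path r t l i"
proof -
  have mu0: "t powr l > 0" using t by simp
  obtain x w y s where eq: "cp_point r t (t powr l) = (x, w, y, s)" and cp: "cp_cond r t (t powr l) x w y s"
    using cp_point_cond[OF t mu0] by blast
  note B = cp_bounds[OF r t l refl H cp]
  have P: "pd_path r t l i = (if i < nvar r then x i
          else if i < nvar r + ncon r then w (i - nvar r)
          else if i < 2 * nvar r + ncon r then y (i - (nvar r + ncon r))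
          else if i < pd_dim r then s (i - (2 * nvar r + ncon r))
          else 0)" for i
    unfolding pd_path_def eq by simp
  have Pp: "p_path r t l i = (if i < nvar r then x i else if i < p_dim r then w (i - nvar r) else 0)" for i
    unfolding p_path_def eq by simp
  have pos: "\<forall>j<nvar r. 0 < x j \<and> 0 < s j" "\<forall>k<ncon r. 0 < w k \<and> 0 < y k" "\<forall>j\<ge>nvar r. s j = 0"
    using cp unfolding cp_cond_def by auto
  have nm: "nvar r < ncon r" using r by (simp add: nvar_def ncon_def)
  have "0 \<le> M2 r t l" unfolding M2_def by (simp add: le_max_iff_disj)
  then have KM: "0 \<le> KK r * M2 r t l" using KK_ge3[of r] by simp
  show "\<forall>i<pd_dim r. 0 \<le> pd_path r t l i \<and> (i \<noteq> iz r \<and> i \<noteq> iz' r \<longrightarrow> pd_path r t l i \<le> KK r * M2 r t l)"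
  proof (intro allI impI)
    fix i assume i: "i < pd_dim r"
    consider "i < nvar r" | "nvar r \<le> i" "i < nvar r + ncon r" | "nvar r + ncon r \<le> i" "i < 2 * nvar r + ncon r"
      | "2 * nvar r + ncon r \<le> i" "i - (2 * nvar r + ncon r) < nvar r" | "2 * nvar r + ncon r \<le> i" "i - (2 * nvar r + ncon r) \<ge> nvar r"
      by linarith
    then show "0 \<le> pd_path r t l i \<and> (i \<noteq> iz r \<and> i \<noteq> iz' r \<longrightarrow> pd_path r t l i \<le> KK r * M2 r t l)"
    proof cases
      case 1 then show ?thesis using B(1) P[of i] by (auto simp: less_imp_le)
    next
      case 2
      have k: "i - nvar r < ncon r" using 2 by simp
      have "i \<noteq> iz r \<and> i \<noteq> iz' r \<longrightarrow> i - nvar r \<noteq> 3*r-1 \<and> i - nvar r \<noteq> 3*r" using 2 unfolding iz_def iz'_def by auto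
      then show ?thesis using B(2) P[of i] 2 k pos(2) by (auto simp: less_imp_le)
    next
      case 3
      have k: "i - (nvar r + ncon r) < ncon r" using 3 nm by simp
      then show ?thesis using B(3) P[of i] 3 by (auto simp: less_imp_le)
    next
      case 4
      then show ?thesis using B(4) P[of i] i by (auto simp: less_imp_le)
    next
      case 5
      then show ?thesis using pos(3) P[of i] i KM by auto
    qed
  qed
  have izr: "nvar r \<le> iz r" "iz r < nvar r + ncon r" "iz r - nvar r = 3*r-1"
    "nvar r \<le> iz' r" "iz' r < nvar r + ncon r" "iz' r - nvar r = 3*r"
    using r by (auto simp: iz_def iz'_def ncon_def)
  show "t powr (1 + Uf (r-1) l) / KK r \<le> pd_path r t l (iz r)" "pd_path r t l (iz r) \<le> KK r * t powr (1 + Uf (r-1) l)"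
    "t powr (1 + Vf (r-1) l) / KK r \<le> pd_path r t l (iz' r)" "pd_path r t l (iz' r) \<le> KK r * t powr (1 + Vf (r-1) l)"
    using B(5-8) P izr by auto
  show "\<forall>i<p_dim r. p_path r t l i = pd_path r t l i"
    using P Pp by (auto simp: p_dim_def)
qed

lemma normp_ge: "j < p \<Longrightarrow> \<bar>d j\<bar> \<le> normp p d"
proof -
  assume j: "j < p"
  have "d j * d j \<le> (\<Sum>i<p. d i * d i)" by (rule member_le_sum) (use j in auto)
  then have "sqrt (d j * d j) \<le> sqrt (\<Sum>i<p. d i * d i)" by (rule real_sqrt_le_mono)
  then show ?thesis by (simp add: normp_def dotp_def)
qed

lemma angle_lemma:
  fixes d d' :: "nat \<Rightarrow> real"
  assumes j: "j < p" and j': "j' < p" and jj: "j \<noteq> j'" and th: "0 \<le> \<theta>" "\<theta> \<le> 1"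
    and dj: "d j \<noteq> 0" and dj': "d' j' \<noteq> 0"
    and D: "\<forall>i<p. i \<noteq> j \<longrightarrow> \<bar>d i\<bar> \<le> \<theta> * \<bar>d j\<bar>"
    and D': "\<forall>i<p. i \<noteq> j' \<longrightarrow> \<bar>d' i\<bar> \<le> \<theta> * \<bar>d' j'\<bar>"
    and pe: "real p * \<theta> \<le> sin \<epsilon>" and e: "0 < \<epsilon>" "\<epsilon> < pi/2"
  shows "vang p d d' \<ge> pi/2 - \<epsilon>"
proof -
  define a where "a = \<bar>d j\<bar>"
  define b where "b = \<bar>d' j'\<bar>"
  have a0: "a > 0" "b > 0" using dj dj' unfolding a_def b_def by auto
  have na: "normp p d \<ge> a" "normp p d' \<ge> b" unfolding a_def b_def using normp_ge j j' by auto
  have np: "normp p d > 0" "normp p d' > 0" using na a0 by linarith+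
  have trm: "\<bar>d i * d' i\<bar> \<le> \<theta> * (a * b)" if i: "i < p" for i
  proof (cases "i = j")
    case True
    then have "\<bar>d' i\<bar> \<le> \<theta> * b" using D' i jj unfolding b_def by auto
    then have "\<bar>d j\<bar> * \<bar>d' i\<bar> \<le> \<bar>d j\<bar> * (\<theta> * b)" by (intro mult_left_mono) auto
    then have "\<bar>d i\<bar> * \<bar>d' i\<bar> \<le> a * (\<theta> * b)" using True unfolding a_def by simp
    then show ?thesis by (simp add: abs_mult algebra_simps)
  next
    case False
    then have di: "\<bar>d i\<bar> \<le> \<theta> * a" using D i unfolding a_def by auto
    show ?thesis
    proof (cases "i = j'")
      case True
      have "\<bar>d i\<bar> * \<bar>d' j'\<bar> \<le> (\<theta> * a) * \<bar>d' j'\<bar>" using di by (intro mult_right_mono) auto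
      then have "\<bar>d i\<bar> * \<bar>d' i\<bar> \<le> (\<theta> * a) * b" using True unfolding b_def by simp
      then show ?thesis by (simp add: abs_mult algebra_simps)
    next
      case False
      then have di': "\<bar>d' i\<bar> \<le> \<theta> * b" using D' i unfolding b_def by auto
      have "\<bar>d i\<bar> * \<bar>d' i\<bar> \<le> (\<theta> * a) * (\<theta> * b)" using di di' th a0 by (intro mult_mono) auto
      also have "\<dots> \<le> (1 * a) * (\<theta> * b)" using th a0 by (intro mult_right_mono mult_mono) auto
      finally show ?thesis by (simp add: abs_mult algebra_simps)
    qed
  qed
  have "\<bar>dotp p d d'\<bar> \<le> (\<Sum>i<p. \<bar>d i * d' i\<bar>)" unfolding dotp_def by (rule sum_abs)
  also have "\<dots> \<le> (\<Sum>i<p. \<theta> * (a * b))" by (rule sum_mono) (use trm in auto)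
  also have "\<dots> = real p * \<theta> * (a * b)" by simp
  finally have dot: "\<bar>dotp p d d'\<bar> \<le> real p * \<theta> * (a * b)" .
  define c where "c = dotp p d d' / (normp p d * normp p d')"
  have "\<bar>c\<bar> = \<bar>dotp p d d'\<bar> / (normp p d * normp p d')" unfolding c_def using np by (simp add: abs_divide)
  also have "\<dots> \<le> real p * \<theta> * (a * b) / (normp p d * normp p d')"
    using dot np by (intro divide_right_mono) auto
  also have "\<dots> \<le> real p * \<theta> * (a * b) / (a * b)"
    using na a0 th by (intro divide_left_mono mult_mono) auto
  also have "\<dots> = real p * \<theta>" using a0 by simp
  finally have cb: "\<bar>c\<bar> \<le> sin \<epsilon>" using pe by linarith
  have s1: "sin \<epsilon> \<le> 1" by simp
  have c1: "-1 \<le> c" "c \<le> sin \<epsilon>" using cb s1 abs_le_iff[of c "sin \<epsilon>"] by linarith+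
  have "arccos (sin \<epsilon>) \<le> arccos c"
    by (rule arccos_le_arccos[OF c1 s1])
  moreover have "arccos (sin \<epsilon>) = pi/2 - \<epsilon>"
  proof -
    have "sin \<epsilon> = cos (pi/2 - \<epsilon>)" by (simp add: cos_diff)
    then show ?thesis using e by (simp add: arccos_cos)
  qed
  moreover have "vang p d d' = arccos c" unfolding vang_def c_def using np by simp
  ultimately show ?thesis by simp
qed

lemma dominance:
  fixes a b :: "nat \<Rightarrow> real"
  assumes a0: "\<forall>i<p. 0 \<le> a i" and b0: "\<forall>i<p. 0 \<le> b i" and j: "j < p"
    and bj: "A / K \<le> b j" and ab: "\<forall>i<p. a i \<le> K * B" and bb: "\<forall>i<p. i \<noteq> j \<longrightarrow> b i \<le> K * B"
    and K: "K > 0" and A: "A > 0" and B: "B \<ge> 0" and small: "2 * K^2 * B \<le> A"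
  shows "b j - a j > 0" "\<forall>i<p. i \<noteq> j \<longrightarrow> \<bar>b i - a i\<bar> \<le> (2 * K^2 * B / A) * \<bar>b j - a j\<bar>"
proof -
  have KB: "K * B \<le> A / (2 * K)" using small K by (simp add: field_simps power2_eq_square)
  have dj: "b j - a j \<ge> A / (2 * K)"
  proof -
    have "a j \<le> A / (2 * K)" using ab j KB by fastforce
    moreover have "A / K = 2 * (A / (2 * K))" using K by simp
    ultimately show ?thesis using bj by linarith
  qed
  show "b j - a j > 0" using dj A K by (smt (verit) divide_pos_pos)
  show "\<forall>i<p. i \<noteq> j \<longrightarrow> \<bar>b i - a i\<bar> \<le> (2 * K^2 * B / A) * \<bar>b j - a j\<bar>"
  proof (intro allI impI)
    fix i assume i: "i < p" "i \<noteq> j"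
    have "\<bar>b i - a i\<bar> \<le> K * B" using a0 b0 ab bb i by (smt (verit))
    also have "K * B = (2 * K^2 * B / A) * (A / (2 * K))" using K A by (simp add: field_simps power2_eq_square)
    also have "\<dots> \<le> (2 * K^2 * B / A) * \<bar>b j - a j\<bar>"
      using dj K A B by (intro mult_left_mono) auto
    finally show "\<bar>b i - a i\<bar> \<le> (2 * K^2 * B / A) * \<bar>b j - a j\<bar>" .
  qed
qed

definition NN :: "nat \<Rightarrow> nat" where "NN r = 2^(r-1)"
definition del0 :: "nat \<Rightarrow> real" where "del0 r = (1/2)^(r-2) - (1/2)^(2*r)"
definition lam :: "nat \<Rightarrow> nat \<Rightarrow> real" where "lam r k = real k * del0 r"
definition lmax :: "nat \<Rightarrow> real" where "lmax r = 2 - (1/2)^(r+1)"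

lemma half_pow_mult: "(2::real)^n * (1/2)^n = 1"
  by (simp add: power_one_over)

lemma del0_pos: "r \<ge> 2 \<Longrightarrow> del0 r > 0"
proof -
  assume r: "r \<ge> 2"
  have "(1/2::real)^(2*r) < (1/2)^(r-2)" using r by (intro power_strict_decreasing) auto
  then show ?thesis unfolding del0_def by simp
qed

lemma lam_N: assumes r: "r \<ge> 2" shows "lam r (NN r) = lmax r"
proof -
  obtain q where rq: "r = q + 2" using r by (metis add.commute le_Suc_ex)
  have a: "(2::real)^(q+1) * (1/2)^q = 2" using half_pow_mult[of q] by (simp add: algebra_simps)
  have b: "(2::real)^(q+1) * (1/2)^(2*(q+2)) = (1/2)^(q+3)"
  proof -
    have ee: "2*(q+2) = (q+1)+(q+3)" by simp
    have "(1/2::real)^(2*(q+2)) = (1/2)^(q+1) * (1/2)^(q+3)" by (subst ee) (rule power_add)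
    then show ?thesis using half_pow_mult[of "q+1"] by (simp add: algebra_simps)
  qed
  have "lam r (NN r) = 2^(q+1) * ((1/2)^q - (1/2)^(2*(q+2)))" unfolding lam_def NN_def del0_def rq by simp
  also have "\<dots> = 2 - (1/2)^(q+3)" using a b by (simp add: right_diff_distrib)
  finally show ?thesis unfolding lmax_def rq by (simp add: numeral_eq_Suc)
qed

lemma lam_range: assumes r: "r \<ge> 2" and k: "k \<le> NN r" shows "0 \<le> lam r k" "lam r k \<le> lmax r" "lam r k \<le> 2"
proof -
  show "0 \<le> lam r k" unfolding lam_def using del0_pos[OF r] by simp
  have "lam r k \<le> lam r (NN r)" unfolding lam_def using del0_pos[OF r] k by (intro mult_right_mono) auto
  then show "lam r k \<le> lmax r" using lam_N[OF r] by simp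
  moreover have "(1/2::real)^(r+1) \<ge> 0" by simp
  ultimately show "lam r k \<le> 2" unfolding lmax_def by linarith
qed

lemma lam_mono: "r \<ge> 2 \<Longrightarrow> k < k' \<Longrightarrow> lam r k < lam r k'"
  unfolding lam_def using del0_pos by (intro mult_strict_right_mono) auto

lemma D_at_lam:
  assumes r: "r \<ge> 2" and k: "k \<le> NN r"
  shows "even k \<Longrightarrow> Dt (r-1) (lam r k) \<ge> gg r" "odd k \<Longrightarrow> Dt (r-1) (lam r k) \<le> - gg r"
proof -
  obtain q where rq: "r = q + 2" using r by (metis add.commute le_Suc_ex)
  have r1: "r - 1 = Suc q" using rq by simp
  have k2: "k \<le> 2^(Suc q)" using k unfolding NN_def rq by simp
  have G: "Dt (Suc q) (real k / 2^q) = (-1)^k * (1/2)^(Suc q)" by (rule D_grid[OF k2])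
  have pt: "real k / 2^q = real k * (1/2)^q" by (simp add: power_one_over)
  have dist: "\<bar>lam r k - real k / 2^q\<bar> \<le> (1/2)^(q+3)"
  proof -
    have "lam r k - real k / 2^q = - (real k * (1/2)^(2*(q+2)))" unfolding lam_def del0_def rq pt
      by (simp add: algebra_simps)
    then have "\<bar>lam r k - real k / 2^q\<bar> = real k * (1/2)^(2*(q+2))" by simp
    also have "\<dots> \<le> 2^(q+1) * (1/2)^(2*(q+2))"
    proof -
      have "real k \<le> real (2^(Suc q))" using k2 by (simp only: of_nat_le_iff)
      then have "real k \<le> 2^(q+1)" by simp
      then show ?thesis by (intro mult_right_mono) auto
    qed
    also have "\<dots> = (1/2)^(q+3)"
    proof -
      have ee: "2*(q+2) = (q+1)+(q+3)" by simp
    have "(1/2::real)^(2*(q+2)) = (1/2)^(q+1) * (1/2)^(q+3)" by (subst ee) (rule power_add)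
      then show ?thesis using half_pow_mult[of "q+1"] by (simp add: algebra_simps)
    qed
    finally show ?thesis .
  qed
  have L: "\<bar>Dt (Suc q) (lam r k) - (-1)^k * (1/2)^(Suc q)\<bar> \<le> (1/2)^(q+3)"
    using D_lip[of "Suc q" "lam r k" "real k / 2^q"] dist G by simp
  have gq: "gg r = (1/2)^(q+2)" unfolding gg_def rq ..
  have ineq: "(1/2::real)^(Suc q) - (1/2)^(q+3) \<ge> (1/2)^(q+2)"
  proof -
    have "(1/2::real)^(Suc q) = 4 * (1/2)^(q+3)" "(1/2::real)^(q+2) = 2 * (1/2)^(q+3)" by (simp_all add: numeral_eq_Suc)
    then show ?thesis by simp
  qed
  show "even k \<Longrightarrow> Dt (r-1) (lam r k) \<ge> gg r" using L ineq unfolding r1 gq by (auto simp: abs_le_iff)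
  show "odd k \<Longrightarrow> Dt (r-1) (lam r k) \<le> - gg r" using L ineq unfolding r1 gq by (auto simp: abs_le_iff)
qed

lemma E_step:
  assumes r: "r \<ge> 2" and k: "1 \<le> k" "k \<le> NN r"
  shows "EE r (lam r (k-1)) \<le> EE r (lam r k) - gg r"
proof -
  have mono: "lam r (k-1) \<le> lam r k" using lam_mono[OF r, of "k-1" k] k by simp
  note tm = trop_mono[OF mono, of "r-1"]
  have g0: "gg r > 0" by (simp add: gg_def)
  show ?thesis
  proof (cases "even k")
    case True
    then have o: "odd (k-1)" using k by simp
    have D1: "Dt (r-1) (lam r k) \<ge> gg r" using D_at_lam(1)[OF r k(2) True] .
    have D0: "Dt (r-1) (lam r (k-1)) \<le> - gg r" using D_at_lam(2)[OF r _ o] k by simp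
    show ?thesis using D1 D0 tm g0 D_eq[of "r-1" "lam r k"] D_eq[of "r-1" "lam r (k-1)"]
      unfolding EE_def Sf_def by (auto simp: max_def)
  next
    case False
    then have o: "even (k-1)" using k by simp
    have D1: "Dt (r-1) (lam r k) \<le> - gg r" using D_at_lam(2)[OF r k(2) False] .
    have D0: "Dt (r-1) (lam r (k-1)) \<ge> gg r" using D_at_lam(1)[OF r _ o] k by simp
    show ?thesis using D1 D0 tm g0 D_eq[of "r-1" "lam r k"] D_eq[of "r-1" "lam r (k-1)"]
      unfolding EE_def Sf_def by (auto simp: max_def)
  qed
qed

lemma tc_ge:
  assumes "strict_mono_on {..N} \<tau>" "\<tau> ` {..N} \<subseteq> S"
  shows "ereal (poly_curv p (\<lambda>k. \<sigma> (\<tau> k)) N) \<le> total_curvature p \<sigma> S"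
proof -
  have mem: "(N, \<tau>) \<in> {(N, \<tau>). strict_mono_on {..N} \<tau> \<and> \<tau> ` {..N} \<subseteq> S}" using assms by simp
  show ?thesis unfolding total_curvature_def
    using SUP_upper[OF mem, of "\<lambda>(N, \<tau>). ereal (poly_curv p (\<lambda>k. \<sigma> (\<tau> k)) N)"] by simp
qed

lemma tc_nonneg: "0 \<in> S \<Longrightarrow> 0 \<le> total_curvature p \<sigma> S"
proof -
  assume S: "0 \<in> S"
  have "ereal (poly_curv p (\<lambda>k. \<sigma> ((\<lambda>_. 0) k)) 0) \<le> total_curvature p \<sigma> S"
    by (rule tc_ge) (use S in \<open>auto simp: strict_mono_on_def\<close>)
  then show ?thesis by (simp add: poly_curv_def zero_ereal_def)
qed

lemma tc_mono: "S \<subseteq> S' \<Longrightarrow> total_curvature p \<sigma> S \<le> total_curvature p \<sigma> S'"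
  unfolding total_curvature_def by (rule SUP_subset_mono) auto

lemma M2_le: "t \<ge> 1 \<Longrightarrow> r \<ge> 2 \<Longrightarrow> M2 r t l \<le> t powr EE r l"
proof -
  assume t: "t \<ge> 1" and r: "r \<ge> 2"
  have "EE r l - gg r \<le> EE r l" using expo_facts(3)[OF r] by simp
  moreover have "1 + min (Uf (r-1) l) (Vf (r-1) l) \<le> EE r l" unfolding EE_def Sf_def by simp
  ultimately show ?thesis unfolding M2_def using t by (auto intro: powr_mono)
qed

lemma UV_gap:
  assumes r: "r \<ge> 2" and k: "k \<le> NN r"
  shows "even k \<Longrightarrow> 1 + Vf (r-1) (lam r k) = EE r (lam r k) \<and> 1 + min (Uf (r-1) (lam r k)) (Vf (r-1) (lam r k)) \<le> EE r (lam r k) - gg r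
          \<and> 1 + Uf (r-1) (lam r k) \<le> EE r (lam r k) - gg r"
    "odd k \<Longrightarrow> 1 + Uf (r-1) (lam r k) = EE r (lam r k) \<and> 1 + min (Uf (r-1) (lam r k)) (Vf (r-1) (lam r k)) \<le> EE r (lam r k) - gg r
          \<and> 1 + Vf (r-1) (lam r k) \<le> EE r (lam r k) - gg r"
proof -
  have g0: "gg r > 0" by (simp add: gg_def)
  have de: "Vf (r-1) (lam r k) - Uf (r-1) (lam r k) = Dt (r-1) (lam r k)" by (rule D_eq)
  show "even k \<Longrightarrow> 1 + Vf (r-1) (lam r k) = EE r (lam r k) \<and> 1 + min (Uf (r-1) (lam r k)) (Vf (r-1) (lam r k)) \<le> EE r (lam r k) - gg r
          \<and> 1 + Uf (r-1) (lam r k) \<le> EE r (lam r k) - gg r"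
    using D_at_lam(1)[OF r k] de g0 unfolding EE_def Sf_def by (auto simp: max_def min_def)
  show "odd k \<Longrightarrow> 1 + Uf (r-1) (lam r k) = EE r (lam r k) \<and> 1 + min (Uf (r-1) (lam r k)) (Vf (r-1) (lam r k)) \<le> EE r (lam r k) - gg r
          \<and> 1 + Vf (r-1) (lam r k) \<le> EE r (lam r k) - gg r"
    using D_at_lam(2)[OF r k] de g0 unfolding EE_def Sf_def by (auto simp: max_def min_def)
qed

lemma curv_bound:
  assumes r: "r \<ge> 2" and e: "0 < \<epsilon>" "\<epsilon> < pi/2" and t: "t \<ge> 2"
    and H: "2 * NM r * t powr lmax r \<le> t^2"
    and S1: "2 * (KK r)^2 * t powr (- gg r) \<le> 1"
    and S2: "real (pd_dim r) * (2 * (KK r)^2 * t powr (- gg r)) \<le> sin \<epsilon>"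
    and pC: "p \<le> pd_dim r" "iz r < p" "iz' r < p" "\<And>l i. i < p \<Longrightarrow> C l i = pd_path r t l i"
  shows "poly_curv p (\<lambda>k. C (lam r k)) (NN r) \<ge> (real (NN r) - 1) * (pi/2 - \<epsilon>)"
proof -
  define N where "N = NN r"
  define \<theta> where "\<theta> = 2 * (KK r)^2 * t powr (- gg r)"
  define P where "P k = C (lam r k)" for k
  define jj where "jj (k::nat) = (if even k then iz' r else iz r)" for k
  have t1: "t \<ge> 1" "t > 0" using t by auto
  have K: "KK r > 0" using KK_ge3[of r] by simp
  have th0: "0 \<le> \<theta>" unfolding \<theta>_def by simp
  have Hk: "2 * NM r * t powr (lam r k) \<le> t^2" if "k \<le> N" for k
  proof -
    have "t powr (lam r k) \<le> t powr lmax r" using lam_range(2)[OF r that[unfolded N_def]] t1 by (intro powr_mono) auto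
    then have "2 * NM r * t powr (lam r k) \<le> 2 * NM r * t powr lmax r" using NM_ge[of r] by (intro mult_left_mono) auto
    then show ?thesis using H by linarith
  qed
  have l0: "0 \<le> lam r k" for k using lam_range(1)[OF r] unfolding lam_def using del0_pos[OF r] by simp
  note pb = pd_bounds[OF r t l0 Hk]
  have Pi: "P k i = pd_path r t (lam r k) i" if "i < p" for k i using pC(4)[OF that] unfolding P_def .
  have izz: "iz r \<noteq> iz' r" using r by (simp add: iz_def iz'_def)
  have gen: "P k i \<le> KK r * t powr EE r (lam r k)" "0 \<le> P k i" if "k \<le> N" "i < p" for k i
  proof -
    have ipd: "i < pd_dim r" using that pC(1) by simp
    have M: "M2 r t (lam r k) \<le> t powr EE r (lam r k)" by (rule M2_le[OF t1(1) r])
    have u: "t powr (1 + Uf (r-1) (lam r k)) \<le> t powr EE r (lam r k)" "t powr (1 + Vf (r-1) (lam r k)) \<le> t powr EE r (lam r k)"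
      using t1 by (auto intro!: powr_mono simp: EE_def Sf_def)
    have KM: "KK r * M2 r t (lam r k) \<le> KK r * t powr EE r (lam r k)" using M K by (intro mult_left_mono) auto
    have Ku: "KK r * t powr (1 + Uf (r-1) (lam r k)) \<le> KK r * t powr EE r (lam r k)"
             "KK r * t powr (1 + Vf (r-1) (lam r k)) \<le> KK r * t powr EE r (lam r k)" using u K by (auto intro: mult_left_mono)
    show "0 \<le> P k i" using pb(1)[OF that(1)] ipd Pi[OF that(2)] by auto
    show "P k i \<le> KK r * t powr EE r (lam r k)"
    proof (cases "i = iz r \<or> i = iz' r")
      case True then show ?thesis using pb(3,5)[OF that(1)] Ku Pi[OF that(2)] by auto
    next
      case False then show ?thesis using pb(1)[OF that(1)] ipd KM Pi[OF that(2)] by force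
    qed
  qed
  have seg: "P k (jj k) - P (k-1) (jj k) > 0 \<and>
      (\<forall>i<p. i \<noteq> jj k \<longrightarrow> \<bar>P k i - P (k-1) i\<bar> \<le> \<theta> * \<bar>P k (jj k) - P (k-1) (jj k)\<bar>)"
    if k: "1 \<le> k" "k \<le> N" for k
  proof -
    define E where "E = EE r (lam r k)"
    define A where "A = t powr E"
    define B where "B = t powr (E - gg r)"
    have A0: "A > 0" unfolding A_def using t1 by simp
    have B0: "B \<ge> 0" unfolding B_def by simp
    have BA: "2 * (KK r)^2 * B / A = \<theta>" unfolding A_def B_def \<theta>_def using t1
      by (simp add: powr_diff powr_minus divide_inverse)
    have small: "2 * (KK r)^2 * B \<le> A"
    proof -
      have "2 * (KK r)^2 * B / A \<le> 1" using S1 BA unfolding \<theta>_def by simp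
      then show ?thesis using A0 by (simp add: divide_le_eq)
    qed
    have km1: "k - 1 \<le> N" using k by simp
    have Es: "EE r (lam r (k-1)) \<le> E - gg r" using E_step[OF r k(1) k(2)[unfolded N_def]] unfolding E_def .
    have ab: "\<forall>i<p. P (k-1) i \<le> KK r * B"
    proof (intro allI impI)
      fix i assume i: "i < p"
      have "t powr EE r (lam r (k-1)) \<le> B" unfolding B_def using Es t1 by (intro powr_mono) auto
      then have "KK r * t powr EE r (lam r (k-1)) \<le> KK r * B" using K by (intro mult_left_mono) auto
      then show "P (k-1) i \<le> KK r * B" using gen(1)[OF km1 i] by linarith
    qed
    have jp: "jj k < p" unfolding jj_def using pC by auto
    have kN: "k \<le> NN r" using k unfolding N_def by simp
    have Mk: "M2 r t (lam r k) \<le> B"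
    proof -
      have "1 + min (Uf (r-1) (lam r k)) (Vf (r-1) (lam r k)) \<le> E - gg r"
        using UV_gap[OF r kN] unfolding E_def by (cases "even k") auto
      then show ?thesis unfolding M2_def B_def E_def[symmetric] using t1 by (auto intro: powr_mono)
    qed
    have bj: "A / KK r \<le> P k (jj k)"
    proof (cases "even k")
      case True
      then have "1 + Vf (r-1) (lam r k) = E" using UV_gap(1)[OF r kN] unfolding E_def by blast
      then show ?thesis using pb(4)[OF k(2)] True Pi[OF jp] unfolding A_def jj_def by simp
    next
      case False
      then have "1 + Uf (r-1) (lam r k) = E" using UV_gap(2)[OF r kN] unfolding E_def by blast
      then show ?thesis using pb(2)[OF k(2)] False Pi[OF jp] unfolding A_def jj_def by simp
    qed
    have bb: "\<forall>i<p. i \<noteq> jj k \<longrightarrow> P k i \<le> KK r * B"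
    proof (intro allI impI)
      fix i assume i: "i < p" "i \<noteq> jj k"
      have ipd: "i < pd_dim r" using i pC(1) by simp
      show "P k i \<le> KK r * B"
      proof (cases "i = iz r \<or> i = iz' r")
        case True
        show ?thesis
        proof (cases "even k")
          case ev: True
          then have ii: "i = iz r" using True i(2) unfolding jj_def by auto
          have "1 + Uf (r-1) (lam r k) \<le> E - gg r" using UV_gap(1)[OF r kN ev] unfolding E_def by blast
          then have "t powr (1 + Uf (r-1) (lam r k)) \<le> B" unfolding B_def using t1 by (intro powr_mono) auto
          then have "KK r * t powr (1 + Uf (r-1) (lam r k)) \<le> KK r * B" using K by (intro mult_left_mono) auto
          then show ?thesis using pb(3)[OF k(2)] Pi[OF i(1)] ii by simp
        next
          case od: False
          then have ii: "i = iz' r" using True i(2) unfolding jj_def by auto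
          have "1 + Vf (r-1) (lam r k) \<le> E - gg r" using UV_gap(2)[OF r kN od] unfolding E_def by blast
          then have "t powr (1 + Vf (r-1) (lam r k)) \<le> B" unfolding B_def using t1 by (intro powr_mono) auto
          then have "KK r * t powr (1 + Vf (r-1) (lam r k)) \<le> KK r * B" using K by (intro mult_left_mono) auto
          then show ?thesis using pb(5)[OF k(2)] Pi[OF i(1)] ii by simp
        qed
      next
        case False
        have "KK r * M2 r t (lam r k) \<le> KK r * B" using Mk K by (intro mult_left_mono) auto
        then show ?thesis using pb(1)[OF k(2)] ipd False Pi[OF i(1)] by force
      qed
    qed
    have a0: "\<forall>i<p. 0 \<le> P (k-1) i" using gen(2)[OF km1] by auto
    have b0: "\<forall>i<p. 0 \<le> P k i" using gen(2)[OF k(2)] by auto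
    note D = dominance[OF a0 b0 jp bj ab bb K A0 B0 small]
    show ?thesis using D unfolding BA by auto
  qed
  have ang: "vang p (P k - P (k-1)) (P (k+1) - P k) \<ge> pi/2 - \<epsilon>" if k: "k \<in> {1..<N}" for k
  proof -
    have k1: "1 \<le> k" "k \<le> N" "1 \<le> k+1" "k+1 \<le> N" using k by auto
    note s1 = seg[OF k1(1,2)] and s2 = seg[OF k1(3,4)]
    have jd: "jj k \<noteq> jj (k+1)" unfolding jj_def using izz by auto
    have jp: "jj k < p" "jj (k+1) < p" unfolding jj_def using pC by auto
    have pth: "real p * \<theta> \<le> sin \<epsilon>"
    proof -
      have "real p * \<theta> \<le> real (pd_dim r) * \<theta>" using pC(1) th0 by (intro mult_right_mono) auto
      then show ?thesis using S2 unfolding \<theta>_def by linarith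
    qed
    show ?thesis
      by (rule angle_lemma[OF jp jd th0 S1[folded \<theta>_def]]) (use s1 s2 pth e in auto)
  qed
  have "poly_curv p (\<lambda>k. C (lam r k)) (NN r) = (\<Sum>k\<in>{1..<N}. vang p (P k - P (k-1)) (P (k+1) - P k))"
    unfolding poly_curv_def P_def N_def by simp
  also have "\<dots> \<ge> (\<Sum>k\<in>{1..<N}. pi/2 - \<epsilon>)" by (rule sum_mono) (use ang in auto)
  finally have "poly_curv p (\<lambda>k. C (lam r k)) (NN r) \<ge> real (N - 1) * (pi/2 - \<epsilon>)" by simp
  moreover have "N \<ge> 1" unfolding N_def NN_def by simp
  ultimately show ?thesis unfolding N_def by (simp add: of_nat_diff)
qed


lemma ev_small: "s < 0 \<Longrightarrow> c > 0 \<Longrightarrow> eventually (\<lambda>t::real. t powr s \<le> c) at_top"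
proof -
  assume s: "s < 0" and c: "c > 0"
  have "((\<lambda>t::real. t powr s) \<longlongrightarrow> 0) at_top" by (rule tendsto_neg_powr[OF s filterlim_ident])
  then have "eventually (\<lambda>t::real. t powr s < c) at_top" using c by (rule order_tendstoD(2))
  then show ?thesis by (rule eventually_mono) simp
qed

lemma liminf_gen:
  fixes r p :: nat and C :: "real \<Rightarrow> real \<Rightarrow> nat \<Rightarrow> real" and S :: "real set"
  assumes r1: "r \<ge> 1" and S: "{0..2} \<subseteq> S"
    and pC: "r \<ge> 2 \<Longrightarrow> p \<le> pd_dim r \<and> iz r < p \<and> iz' r < p \<and> (\<forall>t l i. i < p \<longrightarrow> C t l i = pd_path r t l i)"
  shows "Liminf at_top (\<lambda>t. total_curvature p (C t) S) \<ge> ereal ((2 ^ (r - 1) - 1) * pi / 2)"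
proof (cases "r = 1")
  case True
  have "0 \<in> S" using S by auto
  then have "\<forall>t. 0 \<le> total_curvature p (C t) S" using tc_nonneg by blast
  then have "0 \<le> Liminf at_top (\<lambda>t. total_curvature p (C t) S)"
    by (intro Liminf_bounded) auto
  then show ?thesis using True by (simp add: zero_ereal_def)
next
  case False
  then have r: "r \<ge> 2" using r1 by simp
  note pc = pC[OF r]
  define N where "N = NN r"
  define Bd where "Bd = (2 ^ (r - 1) - 1) * pi / 2"
  have NB: "Bd = (real N - 1) * (pi/2)" unfolding Bd_def N_def NN_def by simp
  have N1: "real N \<ge> 1" unfolding N_def NN_def by simp
  show ?thesis unfolding Bd_def[symmetric] le_Liminf_iff
  proof (intro allI impI)
    fix y assume y: "y < ereal Bd"
    obtain b where b: "y < ereal b" "ereal b < ereal Bd" using ereal_dense2[OF y] by blast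
    then have bB: "b < Bd" by simp
    define \<epsilon> where "\<epsilon> = min (pi/4) ((Bd - b) / (2 * real N))"
    have e: "0 < \<epsilon>" "\<epsilon> < pi/2"
    proof -
      show "0 < \<epsilon>" unfolding \<epsilon>_def using bB N1 pi_gt_zero by auto
      have "\<epsilon> \<le> pi/4" unfolding \<epsilon>_def by simp
      then show "\<epsilon> < pi/2" using pi_gt_zero by linarith
    qed
    have eb: "(real N - 1) * (pi/2 - \<epsilon>) > b"
    proof -
      have "(real N - 1) * \<epsilon> \<le> (real N - 1) * ((Bd - b) / (2 * real N))"
        using N1 unfolding \<epsilon>_def by (intro mult_left_mono) auto
      also have "\<dots> < Bd - b"
      proof -
        have "(real N - 1) / (2 * real N) < 1" using N1 by (simp add: field_simps)
        then have "(real N - 1) / (2 * real N) * (Bd - b) < 1 * (Bd - b)" using bB by (intro mult_strict_right_mono) auto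
        then show ?thesis by (simp add: field_simps)
      qed
      finally have "(real N - 1) * \<epsilon> < Bd - b" .
      moreover have "(real N - 1) * (pi/2 - \<epsilon>) = Bd - (real N - 1) * \<epsilon>" using NB by (simp add: algebra_simps)
      ultimately show ?thesis by linarith
    qed
    have se: "sin \<epsilon> > 0" using e by (intro sin_gt_zero) auto
    define c where "c = min (1 / (2 * (KK r)^2)) (sin \<epsilon> / (real (pd_dim r) * (2 * (KK r)^2)))"
    have K: "KK r > 0" using KK_ge3[of r] by simp
    have pd0: "real (pd_dim r) > 0" by (simp add: pd_dim_def nvar_def)
    have c0: "c > 0" unfolding c_def using K se pd0 by simp
    have g0: "- gg r < 0" by (simp add: gg_def)
    have g1: "- ((1/2::real)^(r+1)) < 0" by simp
    have c1: "1 / (2 * NM r) > 0" using NM_ge[of r] by simp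
    have ev: "eventually (\<lambda>t. t \<ge> 2 \<and> t powr (- gg r) \<le> c \<and> t powr (- ((1/2)^(r+1))) \<le> 1 / (2 * NM r)) at_top"
      using eventually_ge_at_top[of 2] ev_small[OF g0 c0] ev_small[OF g1 c1] by eventually_elim auto
    show "\<forall>\<^sub>F t in at_top. y < total_curvature p (C t) S"
      using ev
    proof (rule eventually_mono)
      fix t :: real assume ht: "t \<ge> 2 \<and> t powr (- gg r) \<le> c \<and> t powr (- ((1/2)^(r+1))) \<le> 1 / (2 * NM r)"
      have t: "t \<ge> 2" and tg: "t powr (- gg r) \<le> c" and tl: "t powr (- ((1/2)^(r+1))) \<le> 1 / (2 * NM r)" using ht by auto
      have t0: "t > 0" using t by simp
      have H: "2 * NM r * t powr lmax r \<le> t^2"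
      proof -
        have "t powr lmax r = t powr 2 * t powr (- ((1/2)^(r+1)))" unfolding lmax_def
          by (simp add: powr_add[symmetric])
        also have "\<dots> \<le> t powr 2 * (1 / (2 * NM r))" using tl by (intro mult_left_mono) auto
        finally have "2 * NM r * t powr lmax r \<le> 2 * NM r * (t powr 2 * (1 / (2 * NM r)))"
          using NM_ge[of r] by (intro mult_left_mono) auto
        also have "\<dots> = t^2" using NM_ge[of r] t0 by (simp add: powr_realpow)
        finally show ?thesis .
      qed
      have S1: "2 * (KK r)^2 * t powr (- gg r) \<le> 1"
      proof -
        have "t powr (- gg r) \<le> 1 / (2 * (KK r)^2)" using tg unfolding c_def by simp
        then show ?thesis using K by (simp add: field_simps)
      qed
      have S2: "real (pd_dim r) * (2 * (KK r)^2 * t powr (- gg r)) \<le> sin \<epsilon>"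
      proof -
        have "t powr (- gg r) \<le> sin \<epsilon> / (real (pd_dim r) * (2 * (KK r)^2))" using tg unfolding c_def by simp
        then show ?thesis using K pd0 by (simp add: field_simps)
      qed
      have cb: "poly_curv p (\<lambda>k. C t (lam r k)) (NN r) \<ge> (real (NN r) - 1) * (pi/2 - \<epsilon>)"
        by (rule curv_bound[OF r e t H S1 S2]) (use pc in auto)
      have sm: "strict_mono_on {..N} (lam r)" using lam_mono[OF r] by (auto simp: strict_mono_on_def)
      have im: "lam r ` {..N} \<subseteq> S" using lam_range[OF r] S unfolding N_def by force
      have "ereal (poly_curv p (\<lambda>k. C t (lam r k)) N) \<le> total_curvature p (C t) S"
        by (rule tc_ge[OF sm im])
      moreover have "ereal b < ereal (poly_curv p (\<lambda>k. C t (lam r k)) N)" using cb eb unfolding N_def by simp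
      ultimately have "ereal b < total_curvature p (C t) S" by (rule less_le_trans[rotated])
      then show "y < total_curvature p (C t) S" using b(1) by (rule less_trans[rotated])
    qed
  qed
qed

lemma p_pd: "i < p_dim r \<Longrightarrow> p_path r t l i = pd_path r t l i"
  unfolding p_path_def pd_path_def by (cases "cp_point r t (t powr l)") (auto simp: p_dim_def)

theorem mainTheorem18:
  fixes r :: nat
  assumes "r \<ge> 1"
  shows "Liminf at_top (\<lambda>t. total_curvature (pd_dim r) (pd_path r t) {0..2})
           \<ge> ereal ((2 ^ (r - 1) - 1) * pi / 2)
       \<and> Liminf at_top (\<lambda>t. total_curvature (p_dim r) (p_path r t) {0..2})
           \<ge> ereal ((2 ^ (r - 1) - 1) * pi / 2)
       \<and> Liminf at_top (\<lambda>t. total_curvature (pd_dim r) (pd_path r t) UNIV)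
           \<ge> ereal ((2 ^ (r - 1) - 1) * pi / 2)
       \<and> Liminf at_top (\<lambda>t. total_curvature (p_dim r) (p_path r t) UNIV)
           \<ge> ereal ((2 ^ (r - 1) - 1) * pi / 2)"
proof -
  have pd: "r \<ge> 2 \<Longrightarrow> pd_dim r \<le> pd_dim r \<and> iz r < pd_dim r \<and> iz' r < pd_dim r \<and>
      (\<forall>t l i. i < pd_dim r \<longrightarrow> pd_path r t l i = pd_path r t l i)"
    by (auto simp: iz_def iz'_def pd_dim_def nvar_def ncon_def)
  have pp: "r \<ge> 2 \<Longrightarrow> p_dim r \<le> pd_dim r \<and> iz r < p_dim r \<and> iz' r < p_dim r \<and>
      (\<forall>t l i. i < p_dim r \<longrightarrow> p_path r t l i = pd_path r t l i)"
    using p_pd by (auto simp: iz_def iz'_def pd_dim_def p_dim_def nvar_def ncon_def)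
  show ?thesis
    using liminf_gen[OF assms _ pd] liminf_gen[OF assms _ pp] by auto
qed

end
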